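(* Let $G=(V,E)$ be a chordal graph and let $\sigma$ be any LexDFS order of $G$, starting at vertex $s$. Then there is a vertex order $\rho$ of $V$ ending in $s$ (namely $\rho=\sigma^-$) such that the procedure LexDFS$^+$-Chordal on input $(G,s,\rho)$ outputs $\sigma$. In other words, the procedure can compute every LexDFS order of a chordal graph.
   Context: All graphs are finite, simple, undirected and connected; $n=|V|$, $m=|E|$, $N(v)$ denotes the neighborhood of $v$. A graph is chordal if it has no induced cycle of length greater than 3. A vertex order is a linear order $\sigma=(v_1,\dots,v_n)$ of $V$; $\sigma(i)=v_i$; $u\prec_\sigma v$ means $u$ appears before $v$; $\sigma^-$ is the reverse order. Partition refinement: for an ordered partition $\mathcal Q=(Q_1,\dots,Q_k)$ of $V$ and $S'\subseteq V$, refining $\mathcal Q$ with $S'$ replaces each $Q_i$ by $(Q_i\cap S',\,Q_i\setminus S')$ whenever both are nonempty. DFS: a search that starts at a vertex and repeatedly visits an unvisited neighbor of the most recently visited vertex that still has an unvisited neighbor. DFS$^+(\tau)$ on a graph $H$: the DFS of $H$ starting at the last vertex of $\tau$ that, among the vertices that may be visited next, always visits the rightmost one in $\tau$. LexDFS (started at $s$): label $s$ with $(0)$, all others with the empty label; for $i=1,\dots,n$ pick an unnumbered vertex $v$ with lexicographically largest label, set $\sigma(i)=v$, prepend $i$ to the label of every unnumbered neighbor of $v$. A LexDFS order is any possible output. LexBFS (started at $s$): same, but $s$ gets $(n)$ and $n-i$ is appended instead of prepending $i$. For $\rho$ ending in $s$, LexDFS$^+(\rho)$ / LexBFS$^+(\rho)$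 breaks ties among largest labels by choosing the rightmost vertex in $\rho$. $\mathcal L$-tree of a vertex order $(v_1,\dots,v_n)$: the spanning tree rooted at $v_1$ with an edge from each $v_i$ ($i>1$) to its rightmost neighbor $v_j$ with $j<i$. Procedure Ordering$(G,T,s,\rho)$: let $\beta$ be the reverse of a BFS order of the tree $T$ starting at $s$; $\mathcal Q=(V)$; for $i=1,\dots,n$, with $v=\beta(i)$, refine $\mathcal Q$ with $\{w\in N(v): w\prec_\beta v\}$; order each class of $\mathcal Q$ according to $\rho^-$ and move $\{s\}$ to the leftmost position; let $\tau$ be the reverse of the resulting order of all vertices; output DFS$^+(\tau)$ on $T$. Procedure LexDFS$^+$-Chordal$(G,s,\rho)$: compute the LexBFS$^+(\rho)$ order $\pi$ of $G$, let $T$ be the $\mathcal L$-tree of $\pi$, output Ordering$(G,T,s,\rho)$. *)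

theory Defs
  imports Main
begin

definition graph :: "'a set \<Rightarrow> ('a \<times> 'a) set \<Rightarrow> bool" where
  "graph V E \<longleftrightarrow> finite V \<and> V \<noteq> {} \<and> E \<subseteq> V \<times> V \<and> sym E \<and> (\<forall>v. (v, v) \<notin> E)
     \<and> (\<forall>u\<in>V. \<forall>v\<in>V. (u, v) \<in> E\<^sup>*)"

definition induced_cycle :: "('a \<times> 'a) set \<Rightarrow> 'a list \<Rightarrow> bool" where
  "induced_cycle E cs \<longleftrightarrow> distinct cs \<and>
     (\<forall>i<length cs. \<forall>j<length cs. i \<noteq> j \<longrightarrow>
        ((cs ! i, cs ! j) \<in> E \<longleftrightarrow> (j = Suc i mod length cs \<or> i = Suc j mod length cs)))"

definition chordal :: "'a set \<Rightarrow> ('a \<times> 'a) set \<Rightarrow> bool" where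
  "chordal V E \<longleftrightarrow> \<not> (\<exists>cs. set cs \<subseteq> V \<and> length cs > 3 \<and> induced_cycle E cs)"

definition vertex_order :: "'a set \<Rightarrow> 'a list \<Rightarrow> bool" where
  "vertex_order V \<sigma> \<longleftrightarrow> distinct \<sigma> \<and> set \<sigma> = V"

definition prec :: "'a list \<Rightarrow> 'a \<Rightarrow> 'a \<Rightarrow> bool" where
  "prec xs u v \<longleftrightarrow> (\<exists>i j. i < j \<and> j < length xs \<and> xs ! i = u \<and> xs ! j = v)"

text \<open>Lexicographic order on labels (a proper prefix is smaller).\<close>
definition lex_le :: "nat list \<Rightarrow> nat list \<Rightarrow> bool" where
  "lex_le xs ys \<longleftrightarrow> xs = ys \<or> (xs, ys) \<in> lexord {(a, b). a < b}"

text \<open>Label of vertex v after the vertices of the prefix p have been numbered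
  (step j+1 numbered p!j; numbers are prepended; s initially has label (0)).\<close>
definition ldfs_label :: "('a \<times> 'a) set \<Rightarrow> 'a \<Rightarrow> 'a list \<Rightarrow> 'a \<Rightarrow> nat list" where
  "ldfs_label E s p v =
     rev [Suc j. j \<leftarrow> [0..<length p], (p ! j, v) \<in> E] @ (if v = s then [0] else [])"

definition is_lexdfs_order :: "'a set \<Rightarrow> ('a \<times> 'a) set \<Rightarrow> 'a \<Rightarrow> 'a list \<Rightarrow> bool" where
  "is_lexdfs_order V E s \<sigma> \<longleftrightarrow> s \<in> V \<and> vertex_order V \<sigma> \<and>
     (\<forall>i<length \<sigma>. \<forall>w \<in> V - set (take i \<sigma>).
        lex_le (ldfs_label E s (take i \<sigma>) w) (ldfs_label E s (take i \<sigma>) (\<sigma> ! i)))"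

text \<open>Label in LexBFS: s starts with (n); at step j+1 the value n-(j+1) is appended.\<close>
definition lbfs_label :: "('a \<times> 'a) set \<Rightarrow> 'a \<Rightarrow> nat \<Rightarrow> 'a list \<Rightarrow> 'a \<Rightarrow> nat list" where
  "lbfs_label E s n p v =
     (if v = s then [n] else []) @ [n - Suc j. j \<leftarrow> [0..<length p], (p ! j, v) \<in> E]"

text \<open>Greedy label search: at each step pick an unnumbered vertex with largest label,
  breaking ties by the rightmost vertex in \<rho>.\<close>
fun greedy_search :: "('a list \<Rightarrow> 'a \<Rightarrow> nat list) \<Rightarrow> 'a list \<Rightarrow> nat \<Rightarrow> 'a list" where
  "greedy_search lab \<rho> 0 = []"
| "greedy_search lab \<rho> (Suc k) =
     (let p = greedy_search lab \<rho> k;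
          U = filter (\<lambda>v. v \<notin> set p) \<rho>;
          M = filter (\<lambda>v. \<forall>w \<in> set U. lex_le (lab p w) (lab p v)) U
      in p @ [last M])"

definition lexbfs_plus :: "('a \<times> 'a) set \<Rightarrow> 'a list \<Rightarrow> 'a list" where
  "lexbfs_plus E \<rho> = greedy_search (lbfs_label E (last \<rho>) (length \<rho>)) \<rho> (length \<rho>)"

definition ltree :: "('a \<times> 'a) set \<Rightarrow> 'a list \<Rightarrow> ('a \<times> 'a) set" where
  "ltree E \<pi> = {(u, v). \<exists>i<length \<pi>. \<exists>j<i. (\<pi> ! j, \<pi> ! i) \<in> E \<and>
       (\<forall>k. j < k \<and> k < i \<longrightarrow> (\<pi> ! k, \<pi> ! i) \<notin> E) \<and>
       ((u, v) = (\<pi> ! i, \<pi> ! j) \<or> (u, v) = (\<pi> ! j, \<pi> ! i))}"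

definition is_bfs_order :: "'a set \<Rightarrow> ('a \<times> 'a) set \<Rightarrow> 'a \<Rightarrow> 'a list \<Rightarrow> bool" where
  "is_bfs_order V E s \<beta> \<longleftrightarrow> vertex_order V \<beta> \<and> \<beta> \<noteq> [] \<and> \<beta> ! 0 = s \<and>
     (\<forall>i. 0 < i \<and> i < length \<beta> \<longrightarrow>
        (let p = take i \<beta>;
             x = hd (filter (\<lambda>x. \<exists>w \<in> V - set p. (x, w) \<in> E) p)
         in (x, \<beta> ! i) \<in> E))"

text \<open>DFS+(\<tau>) on H: start at last \<tau>; visit, among the unvisited neighbours of the
  most recently visited vertex that still has an unvisited neighbour, the rightmost in \<tau>.\<close>
fun dfs_plus_aux :: "('a \<times> 'a) set \<Rightarrow> 'a list \<Rightarrow> nat \<Rightarrow> 'a list" where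
  "dfs_plus_aux H \<tau> 0 = [last \<tau>]"
| "dfs_plus_aux H \<tau> (Suc k) =
     (let p = dfs_plus_aux H \<tau> k;
          U = filter (\<lambda>v. v \<notin> set p) \<tau>;
          x = last (filter (\<lambda>x. \<exists>w \<in> set U. (x, w) \<in> H) p)
      in p @ [last (filter (\<lambda>w. (x, w) \<in> H) U)])"

definition dfs_plus :: "('a \<times> 'a) set \<Rightarrow> 'a list \<Rightarrow> 'a list" where
  "dfs_plus H \<tau> = dfs_plus_aux H \<tau> (length \<tau> - 1)"

definition refine :: "'a set list \<Rightarrow> 'a set \<Rightarrow> 'a set list" where
  "refine Q S = concat (map (\<lambda>C. if C \<inter> S \<noteq> {} \<and> C - S \<noteq> {} then [C \<inter> S, C - S] else [C]) Q)"

text \<open>Ordering(G,T,s,\<rho>), where \<beta> is the reverse of the chosen BFS order of T from s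
  (the BFS order is the only nondeterministic choice; it is a parameter here).\<close>
definition ordering :: "'a set \<Rightarrow> ('a \<times> 'a) set \<Rightarrow> ('a \<times> 'a) set \<Rightarrow> 'a \<Rightarrow> 'a list \<Rightarrow> 'a list \<Rightarrow> 'a list" where
  "ordering V E T s \<rho> \<beta> =
     (let Q = foldl (\<lambda>Q v. refine Q {w. (v, w) \<in> E \<and> prec \<beta> w v}) [V] \<beta>;
          ord = s # filter (\<lambda>v. v \<noteq> s) (concat (map (\<lambda>C. filter (\<lambda>v. v \<in> C) (rev \<rho>)) Q));
          \<tau> = rev ord
      in dfs_plus T \<tau>)"

text \<open>All possible outputs of LexDFS+-Chordal(G,s,\<rho>) (one per BFS choice).\<close>
definition lexdfs_plus_chordal_outputs :: "'a set \<Rightarrow> ('a \<times> 'a) set \<Rightarrow> 'a \<Rightarrow> 'a list \<Rightarrow> 'a list set" where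
  "lexdfs_plus_chordal_outputs V E s \<rho> =
     (let T = ltree E (lexbfs_plus E \<rho>)
      in {ordering V E T s \<rho> (rev b) | b. is_bfs_order V T s b})"

end

theory Submission
  imports Defs
begin

lemma prec_Nil[simp]: "\<not> prec [] u v"
  by (simp add: prec_def)

lemma prec_Cons: "prec (x#xs) u v \<longleftrightarrow> (u = x \<and> v \<in> set xs) \<or> prec xs u v"
proof
  assume "prec (x#xs) u v"
  then obtain i j where ij: "i < j" "j < length (x#xs)" "(x#xs)!i = u" "(x#xs)!j = v"
    unfolding prec_def by blast
  show "(u = x \<and> v \<in> set xs) \<or> prec xs u v"
  proof (cases i)
    case 0
    then have "u = x" using ij by simp
    moreover obtain j' where "j = Suc j'" using ij by (cases j) auto
    ultimately show ?thesis using ij by auto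
  next
    case (Suc i')
    obtain j' where "j = Suc j'" using ij by (cases j) auto
    then have "prec xs u v" unfolding prec_def using ij Suc
      by (intro exI[of _ i'] exI[of _ j']) auto
    then show ?thesis by blast
  qed
next
  assume "(u = x \<and> v \<in> set xs) \<or> prec xs u v"
  then show "prec (x#xs) u v"
  proof
    assume "u = x \<and> v \<in> set xs"
    then obtain j where "j < length xs" "xs!j = v" "u = x" by (auto simp: in_set_conv_nth)
    then show ?thesis unfolding prec_def by (intro exI[of _ 0] exI[of _ "Suc j"]) auto
  next
    assume "prec xs u v"
    then obtain i j where "i < j" "j < length xs" "xs!i = u" "xs!j = v" unfolding prec_def by blast
    then show ?thesis unfolding prec_def by (intro exI[of _ "Suc i"] exI[of _ "Suc j"]) auto
  qed
qed

lemma prec_mem: "prec xs u v \<Longrightarrow> u \<in> set xs \<and> v \<in> set xs"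
  by (induction xs) (auto simp: prec_Cons)

lemma prec_append: "prec (xs@ys) u v \<longleftrightarrow> prec xs u v \<or> (u \<in> set xs \<and> v \<in> set ys) \<or> prec ys u v"
  by (induction xs) (auto simp: prec_Cons)

lemma prec_filter: "prec (filter P xs) u v \<longleftrightarrow> prec xs u v \<and> P u \<and> P v"
  by (induction xs) (auto simp: prec_Cons dest: prec_mem)

lemma prec_rev: "prec (rev xs) u v \<longleftrightarrow> prec xs v u"
  by (induction xs) (auto simp: prec_Cons prec_append)

lemma prec_asym: "distinct xs \<Longrightarrow> prec xs u v \<Longrightarrow> \<not> prec xs v u"
  by (induction xs) (auto simp: prec_Cons dest: prec_mem)

lemma prec_irrefl: "distinct xs \<Longrightarrow> \<not> prec xs u u"
  by (meson prec_asym)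

lemma prec_total: "u \<in> set xs \<Longrightarrow> v \<in> set xs \<Longrightarrow> u \<noteq> v \<Longrightarrow> prec xs u v \<or> prec xs v u"
  by (induction xs) (auto simp: prec_Cons)

lemma prec_trans: "distinct xs \<Longrightarrow> prec xs u v \<Longrightarrow> prec xs v w \<Longrightarrow> prec xs u w"
  by (induction xs) (auto simp: prec_Cons dest: prec_mem)

lemma prec_nth: "distinct xs \<Longrightarrow> i < length xs \<Longrightarrow> j < length xs \<Longrightarrow> prec xs (xs!i) (xs!j) \<longleftrightarrow> i < j"
  unfolding prec_def using nth_eq_iff_index_eq by (metis order.strict_trans)

lemma prec_take: "distinct xs \<Longrightarrow> prec xs u v \<Longrightarrow> v \<in> set (take i xs) \<Longrightarrow> u \<in> set (take i xs)"
proof -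
  assume d: "distinct xs" and p: "prec xs u v" and v: "v \<in> set (take i xs)"
  have "prec (take i xs @ drop i xs) u v" using p by simp
  then have "prec (take i xs) u v \<or> u \<in> set (take i xs) \<or> prec (drop i xs) u v"
    unfolding prec_append by blast
  moreover have "set (take i xs) \<inter> set (drop i xs) = {}"
    using d by (metis append_take_drop_id distinct_append)
  ultimately show ?thesis using v by (auto dest: prec_mem)
qed

lemma lex_le_Nil_left[simp]: "lex_le [] ys"
  unfolding lex_le_def by (cases ys) auto
lemma lex_le_Nil_right[simp]: "lex_le xs [] \<longleftrightarrow> xs = []"
  unfolding lex_le_def by auto
lemma lex_le_Cons[simp]: "lex_le (x#xs) (y#ys) \<longleftrightarrow> x < y \<or> (x = y \<and> lex_le xs ys)"
  unfolding lex_le_def by auto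

lemma lex_le_antisym: "lex_le xs ys \<Longrightarrow> lex_le ys xs \<Longrightarrow> xs = ys"
proof (induction xs arbitrary: ys)
  case Nil then show ?case by simp
next
  case (Cons x xs) then show ?case by (cases ys) auto
qed

lemma lex_le_total: "lex_le xs ys \<or> lex_le ys xs"
proof (induction xs arbitrary: ys)
  case Nil then show ?case by simp
next
  case (Cons x xs) then show ?case by (cases ys) auto
qed

lemma lex_le_trans: "lex_le xs ys \<Longrightarrow> lex_le ys zs \<Longrightarrow> lex_le xs zs"
proof (induction xs arbitrary: ys zs)
  case Nil then show ?case by simp
next
  case (Cons x xs)
  then obtain y ys' where y: "ys = y # ys'" by (cases ys) auto
  with Cons obtain z zs' where z: "zs = z # zs'" by (cases zs) auto
  show ?case using Cons y z by auto
qed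

lemma lex_le_subset:
  "sorted_wrt (>) xs \<Longrightarrow> sorted_wrt (>) ys \<Longrightarrow> set xs \<subseteq> set ys \<Longrightarrow> lex_le (xs::nat list) ys"
proof (induction ys arbitrary: xs)
  case Nil then show ?case by simp
next
  case (Cons y ys)
  show ?case
  proof (cases xs)
    case Nil then show ?thesis by simp
  next
    case (Cons x xs')
    have "x \<in> set (y#ys)" using Cons.prems Cons by auto
    then have "x \<le> y" using Cons.prems(2) by auto
    show ?thesis
    proof (cases "x = y")
      case True
      have "set xs' \<subseteq> set ys" using Cons.prems Cons True by fastforce
      then have "lex_le xs' ys" using Cons.IH Cons.prems Cons by auto
      then show ?thesis using Cons True by simp
    next
      case False then show ?thesis using \<open>x \<le> y\<close> Cons by simp
    qed
  qed
qed

lemma lex_le_diff: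
  "sorted_wrt (>) xs \<Longrightarrow> sorted_wrt (>) ys \<Longrightarrow> lex_le (xs::nat list) ys \<Longrightarrow> xs \<noteq> ys \<Longrightarrow>
    \<exists>m\<in>set ys. m \<notin> set xs \<and> (\<forall>k>m. k \<in> set xs \<longleftrightarrow> k \<in> set ys)"
proof (induction ys arbitrary: xs)
  case Nil then show ?case by simp
next
  case (Cons y ys)
  show ?case
  proof (cases xs)
    case Nil then show ?thesis using Cons.prems by (intro bexI[of _ y]) auto
  next
    case (Cons x xs')
    show ?thesis
    proof (cases "x < y")
      case True then show ?thesis using Cons Cons.prems
        by (intro bexI[of _ y]) auto
    next
      case False
      then have xy: "x = y" "lex_le xs' ys" "xs' \<noteq> ys" using Cons Cons.prems by auto
      then obtain m where m: "m \<in> set ys" "m \<notin> set xs'" "\<forall>k>m. k \<in> set xs' \<longleftrightarrow> k \<in> set ys"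
        using Cons.IH[of xs'] Cons.prems Cons by auto
      have "m < y" using m Cons.prems by auto
      then show ?thesis using m xy Cons by (intro bexI[of _ m]) auto
    qed
  qed
qed

locale L =
  fixes V :: "'a set" and E :: "('a \<times> 'a) set" and s :: 'a and \<sigma> :: "'a list"
  assumes G: "graph V E" and LD: "is_lexdfs_order V E s \<sigma>"
begin

abbreviation lt where "lt u v \<equiv> prec \<sigma> u v"
abbreviation n where "n \<equiv> length \<sigma>"

lemma finV: "finite V" and Esub: "E \<subseteq> V \<times> V" and symE: "(u,v) \<in> E \<Longrightarrow> (v,u) \<in> E"
  and irr: "(v,v) \<notin> E" and conn: "u \<in> V \<Longrightarrow> v \<in> V \<Longrightarrow> (u,v) \<in> E\<^sup>*"
  using G unfolding graph_def sym_def by auto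

lemma EV: "(u,v) \<in> E \<Longrightarrow> u \<in> V \<and> v \<in> V" using Esub by auto

lemma dist: "distinct \<sigma>" and setS: "set \<sigma> = V" and sV: "s \<in> V"
  using LD unfolding is_lexdfs_order_def vertex_order_def by auto

definition idx where "idx v = (THE i. i < n \<and> \<sigma>!i = v)"

lemma idx: "v \<in> V \<Longrightarrow> idx v < n \<and> \<sigma>!idx v = v"
proof -
  assume "v \<in> V"
  then obtain i where i: "i < n" "\<sigma>!i = v" using setS by (auto simp: in_set_conv_nth)
  have "idx v = i" unfolding idx_def
    using i dist by (auto intro!: the_equality simp: nth_eq_iff_index_eq)
  then show ?thesis using i by simp
qed

lemma idx_nth[simp]: "i < n \<Longrightarrow> idx (\<sigma>!i) = i"
  using idx[of "\<sigma>!i"] dist setS by (auto simp: nth_eq_iff_index_eq)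

lemma nth_V[simp]: "i < n \<Longrightarrow> \<sigma>!i \<in> V" using setS by auto

lemma lt_idx: "lt u v \<longleftrightarrow> u \<in> V \<and> v \<in> V \<and> idx u < idx v"
proof
  assume "lt u v"
  then obtain i j where "i<j" "j<n" "\<sigma>!i = u" "\<sigma>!j = v" unfolding prec_def by blast
  then show "u \<in> V \<and> v \<in> V \<and> idx u < idx v" by auto
next
  assume "u \<in> V \<and> v \<in> V \<and> idx u < idx v"
  then show "lt u v" unfolding prec_def using idx by blast
qed

lemma idx_inj: "u \<in> V \<Longrightarrow> v \<in> V \<Longrightarrow> idx u = idx v \<Longrightarrow> u = v"
  using idx by metis

lemma in_take: "v \<in> V \<Longrightarrow> v \<in> set (take i \<sigma>) \<longleftrightarrow> idx v < i"
proof -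
  assume v: "v \<in> V"
  show ?thesis
  proof
    assume "v \<in> set (take i \<sigma>)"
    then obtain j where "j < length (take i \<sigma>)" "take i \<sigma> ! j = v" by (auto simp: in_set_conv_nth)
    then show "idx v < i" by auto
  next
    assume "idx v < i"
    then show "v \<in> set (take i \<sigma>)" using idx[OF v] by (metis in_set_conv_nth length_take min_less_iff_conj nth_take)
  qed
qed

lemma n_pos: "0 < n" using sV setS by (cases \<sigma>) auto

lemma lab_eq: "i \<le> n \<Longrightarrow> ldfs_label E s (take i \<sigma>) v =
    rev (map Suc (filter (\<lambda>j. (\<sigma>!j, v) \<in> E) [0..<i])) @ (if v = s then [0] else [])"
proof -
  assume i: "i \<le> n"
  have gen: "[Suc j. j \<leftarrow> [0..<k], Q j] = map Suc (filter Q [0..<k])" for k and Q :: "nat \<Rightarrow> bool"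
    by (induction k) auto
  have "filter (\<lambda>j. (take i \<sigma> ! j, v) \<in> E) [0..<i] = filter (\<lambda>j. (\<sigma>!j, v) \<in> E) [0..<i]"
    by (rule filter_cong) auto
  then have "[Suc j. j \<leftarrow> [0..<i], (take i \<sigma> ! j, v) \<in> E] = map Suc (filter (\<lambda>j. (\<sigma>!j, v) \<in> E) [0..<i])"
    using gen by metis
  moreover have len: "length (take i \<sigma>) = i" using i by simp
  ultimately show ?thesis unfolding ldfs_label_def len by simp
qed

end

context L begin

lemma LD_at: "i < n \<Longrightarrow> w \<in> V \<Longrightarrow> w \<notin> set (take i \<sigma>) \<Longrightarrow>
   lex_le (ldfs_label E s (take i \<sigma>) w) (ldfs_label E s (take i \<sigma>) (\<sigma>!i))"
  using LD unfolding is_lexdfs_order_def by auto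

lemma s0: "\<sigma>!0 = s"
proof (rule ccontr)
  assume "\<sigma>!0 \<noteq> s"
  then have "lex_le [0] []" using LD_at[of 0 s] n_pos sV lab_eq[of 0] by simp
  then show False by simp
qed

lemma idx_s[simp]: "idx s = 0" using s0 n_pos idx_nth by fastforce

lemma lab_sorted: "sorted_wrt (>) (rev (map Suc (filter P [0..<i])))"
  by (simp add: sorted_wrt_rev sorted_wrt_map sorted_wrt_filter)

lemma lab_set: "set (rev (map Suc (filter P [0..<i]))) = Suc ` {j. j < i \<and> P j}"
  by auto

lemma lab_nonS: "0 < i \<Longrightarrow> i \<le> n \<Longrightarrow> v \<notin> set (take i \<sigma>) \<Longrightarrow> ldfs_label E s (take i \<sigma>) v =
    rev (map Suc (filter (\<lambda>j. (\<sigma>!j, v) \<in> E) [0..<i]))"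
proof -
  assume "0 < i" "i \<le> n" "v \<notin> set (take i \<sigma>)"
  moreover have "s \<in> set (take i \<sigma>)" using in_take[OF sV] \<open>0 < i\<close> by simp
  ultimately show ?thesis using lab_eq by auto
qed

lemma F1:
  assumes ab: "lt a b" and bc: "lt b c" and ac: "(a,c) \<in> E" and nab: "(a,b) \<notin> E"
  shows "\<exists>d. lt a d \<and> lt d b \<and> (d,b) \<in> E \<and> (d,c) \<notin> E"
proof -
  define i where "i = idx b"
  have V: "a \<in> V" "b \<in> V" "c \<in> V" and ia: "idx a < i" and ic: "i < idx c"
    using ab bc lt_idx i_def by auto
  have i: "0 < i" "i < n" using ia ic idx[OF V(3)] by auto
  have bi: "\<sigma>!i = b" using idx[OF V(2)] i_def by simp
  have cn: "c \<notin> set (take i \<sigma>)" "b \<notin> set (take i \<sigma>)" using in_take V ic i_def by auto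
  define xs where "xs = rev (map Suc (filter (\<lambda>j. (\<sigma>!j, c) \<in> E) [0..<i]))"
  define ys where "ys = rev (map Suc (filter (\<lambda>j. (\<sigma>!j, b) \<in> E) [0..<i]))"
  have le: "lex_le xs ys" using LD_at[OF i(2) V(3) cn(1)] lab_nonS[OF i(1) _ cn(1)] lab_nonS[OF i(1) _ cn(2)] i bi
    unfolding xs_def ys_def by simp
  have ain: "Suc (idx a) \<in> set xs" "Suc (idx a) \<notin> set ys"
    using ia ac nab idx[OF V(1)] unfolding xs_def ys_def by auto
  then have "xs \<noteq> ys" by auto
  then obtain m where m: "m \<in> set ys" "m \<notin> set xs" "\<forall>k>m. k \<in> set xs \<longleftrightarrow> k \<in> set ys"
    using lex_le_diff[OF _ _ le] unfolding xs_def ys_def using lab_sorted by blast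
  obtain m' where m': "m = Suc m'" "m' < i" "(\<sigma>!m', b) \<in> E" "(\<sigma>!m', c) \<notin> E"
    using m(1,2) unfolding xs_def ys_def by auto
  have "Suc (idx a) \<le> m" using m(3) ain by (meson not_less)
  then have am: "idx a < m'" using m'(1) m(2) ain(1) by (cases "Suc (idx a) = m") auto
  show ?thesis
    using m' am i by (intro exI[of _ "\<sigma>!m'"]) (auto simp: lt_idx V i_def)
qed

lemma cross: "A \<subseteq> V \<Longrightarrow> s \<in> A \<Longrightarrow> w \<in> V \<Longrightarrow> w \<notin> A \<Longrightarrow> \<exists>a\<in>A. \<exists>b. b \<notin> A \<and> (a,b) \<in> E"
proof -
  assume A: "A \<subseteq> V" "s \<in> A" "w \<notin> A" "w \<in> V"
  have "(s,w) \<in> E\<^sup>*" using conn sV A by auto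
  then show ?thesis using A(3)
  proof (induction rule: rtrancl_induct)
    case base then show ?case using A by simp
  next
    case (step y z) then show ?case by (cases "y \<in> A") auto
  qed
qed

lemma search: "0 < i \<Longrightarrow> i < n \<Longrightarrow> \<exists>j<i. (\<sigma>!j, \<sigma>!i) \<in> E"
proof (rule ccontr)
  assume i: "0 < i" "i < n" and no: "\<not> (\<exists>j<i. (\<sigma>!j, \<sigma>!i) \<in> E)"
  have "set (take i \<sigma>) \<subseteq> V" using setS by (meson set_take_subset subset_trans) 
  moreover have "s \<in> set (take i \<sigma>)" using in_take[OF sV] i by simp
  moreover have "\<sigma>!i \<notin> set (take i \<sigma>)" using in_take i by simp
  ultimately obtain a b where ab: "a \<in> set (take i \<sigma>)" "b \<notin> set (take i \<sigma>)" "(a,b) \<in> E"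
    using cross i by (meson nth_V)
  have bV: "b \<in> V" using ab EV by auto
  have ia: "idx a < i" using ab in_take EV by auto
  have "Suc (idx a) \<in> set (ldfs_label E s (take i \<sigma>) b)"
    using lab_nonS[OF i(1) _ ab(2)] i ia ab(3) idx[of a] EV[OF ab(3)] by auto
  moreover have "ldfs_label E s (take i \<sigma>) (\<sigma>!i) = []"
    using lab_nonS[OF i(1), of "\<sigma>!i"] i no in_take by auto
  ultimately show False using LD_at[OF i(2) bV ab(2)] by auto
qed

end

definition path :: "('a \<times> 'a) set \<Rightarrow> 'a list \<Rightarrow> bool" where
  "path E w \<longleftrightarrow> (\<forall>i. Suc i < length w \<longrightarrow> (w!i, w!Suc i) \<in> E)"

lemma nth_short: "r \<le> q \<Longrightarrow> q \<le> length w \<Longrightarrow>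
   (take r w @ drop q w) ! l = (if l < r then w!l else w!(l - r + q))"
proof -
  assume a: "r \<le> q" "q \<le> length w"
  have lt: "length (take r w) = r" using a by simp
  show ?thesis
  proof (cases "l < r")
    case True then show ?thesis using a by (simp add: nth_append lt)
  next
    case False then show ?thesis using a by (simp add: nth_append lt add.commute)
  qed
qed

lemma path_short:
  assumes p: "path E w" and r: "0 < r" "r \<le> q" "q < length w" and e: "(w!(r-1), w!q) \<in> E"
  shows "path E (take r w @ drop q w)"
  unfolding path_def
proof (intro allI impI)
  fix i assume i: "Suc i < length (take r w @ drop q w)"
  have len: "length (take r w @ drop q w) = r + (length w - q)" using r by simp
  have ns: "(take r w @ drop q w) ! l = (if l < r then w!l else w!(l - r + q))" for l
    using nth_short[of r q w l] r by simp
  show "((take r w @ drop q w) ! i, (take r w @ drop q w) ! Suc i) \<in> E"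
  proof (cases "Suc i < r")
    case True
    then have "Suc i < length w" using r by simp
    then have "(w!i, w!Suc i) \<in> E" using p unfolding path_def by blast
    then show ?thesis using True unfolding ns by simp
  next
    case False
    show ?thesis
    proof (cases "Suc i = r")
      case True
      then have "i = r - 1" by simp
      then show ?thesis using e True unfolding ns by simp
    next
      case False
      then have ri: "r \<le> i" using \<open>\<not> Suc i < r\<close> by simp
      have a: "Suc (i - r + q) < length w" using i len ri by simp
      then have "(w!(i - r + q), w!Suc (i - r + q)) \<in> E" using p unfolding path_def by blast
      moreover have "Suc i - r + q = Suc (i - r + q)" using ri by simp
      ultimately show ?thesis using ri unfolding ns by simp
    qed
  qed
qed

context L begin

definition bad where "bad a b w \<longleftrightarrow> w \<noteq> [] \<and> w!0 = a \<and> w!(length w - 1) = b \<and> lt a b \<and> (a,b) \<notin> E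
   \<and> path E w \<and> (\<forall>i. 0 < i \<and> i < length w - 1 \<longrightarrow> lt b (w!i))"

lemma bad_short:
  assumes bw: "bad a b w" and r: "0 < r" "r \<le> q" "q < length w" and e: "(w!(r-1), w!q) \<in> E"
  shows "bad a b (take r w @ drop q w)"
proof -
  have p: "path E (take r w @ drop q w)" using path_short[OF _ r e] bw bad_def by blast
  have len: "length (take r w @ drop q w) = r + (length w - q)" using r by simp
  have last: "(take r w @ drop q w) ! (length (take r w @ drop q w) - 1) = b"
    using bw r unfolding bad_def len by (auto simp: nth_short)
  have int: "lt b ((take r w @ drop q w) ! i)" if "0 < i" "i < length (take r w @ drop q w) - 1" for i
  proof (cases "i < r")
    case True then show ?thesis using bw that r len unfolding bad_def by (auto simp: nth_short)
  next
    case False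
    then have "0 < i - r + q" "i - r + q < length w - 1" using that r len by auto
    then show ?thesis using bw False r unfolding bad_def by (auto simp: nth_short)
  qed
  show ?thesis using bw p last int r unfolding bad_def by (auto simp: nth_short)
qed

lemma bad_len: "bad a b w \<Longrightarrow> 3 \<le> length w"
proof (rule ccontr)
  assume b: "bad a b w" and "\<not> 3 \<le> length w"
  moreover have "w \<noteq> []" using b unfolding bad_def by blast
  ultimately have "length w = 1 \<or> length w = 2" by (cases "length w") auto
  then show False
  proof
    assume "length w = 1" then show False using b prec_irrefl[OF dist] unfolding bad_def by auto
  next
    assume l2: "length w = 2"
    then have "(w!0, w!1) \<in> E" using b unfolding bad_def path_def by auto
    moreover have "w!1 = b" using b l2 unfolding bad_def by auto
    ultimately show False using b unfolding bad_def by auto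
  qed
qed

lemma bad_min_chordless:
  assumes b: "bad a b w" and m: "\<forall>w'. bad a b w' \<longrightarrow> length w \<le> length w'"
    and ij: "Suc i < j" "j < length w"
  shows "(w!i, w!j) \<notin> E"
proof
  assume e: "(w!i, w!j) \<in> E"
  have "bad a b (take (Suc i) w @ drop j w)" using bad_short[OF b, of "Suc i" j] ij e by simp
  moreover have "length (take (Suc i) w @ drop j w) < length w" using ij by simp
  ultimately show False using m by fastforce
qed

lemma bad_min_distinct:
  assumes b: "bad a b w" and m: "\<forall>w'. bad a b w' \<longrightarrow> length w \<le> length w'"
  shows "distinct w"
proof -
  have key: "w!i \<noteq> w!j" if ij: "i < j" "j < length w" for i j
  proof
    assume eq: "w!i = w!j"
    have p: "path E w" using b bad_def by blast
    show False
    proof (cases "i = 0")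
      case False
      have "Suc (i-1) < length w" using ij False by simp
      then have "(w!(i-1), w!(Suc (i-1))) \<in> E" using p unfolding path_def by blast
      then have "(w!(i-1), w!j) \<in> E" using eq False by simp
      then have "bad a b (take i w @ drop j w)" using bad_short[OF b, of i j] ij False by simp
      moreover have "length (take i w @ drop j w) < length w" using ij by simp
      ultimately show False using m by fastforce
    next
      case True
      have "j \<noteq> length w - 1" using b eq True prec_irrefl[OF dist] unfolding bad_def by auto
      then have j1: "Suc j < length w" using ij by simp
      have "(w!0, w!(Suc j)) \<in> E" using p eq True j1 unfolding path_def by auto
      then have "bad a b (take 1 w @ drop (Suc j) w)" using bad_short[OF b, of 1 "Suc j"] j1 by simp
      moreover have "length (take 1 w @ drop (Suc j) w) < length w" using ij j1 True by simp
      ultimately show False using m by fastforce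
    qed
  qed
  then show ?thesis unfolding distinct_conv_nth
  proof (intro allI impI)
    fix i j assume "i < length w" "j < length w" "i \<noteq> j"
    then show "w!i \<noteq> w!j" using key[of i j] key[of j i] by (cases "i < j") auto
  qed
qed

end

locale LC = L + assumes CH: "chordal V E"
begin

lemma path_V: "path E w \<Longrightarrow> 2 \<le> length w \<Longrightarrow> set w \<subseteq> V"
proof
  fix x assume p: "path E w" and l: "2 \<le> length w" and x: "x \<in> set w"
  then obtain i where i: "i < length w" "w!i = x" by (auto simp: in_set_conv_nth)
  show "x \<in> V"
  proof (cases "Suc i < length w")
    case True
    then have "(w!i, w!(Suc i)) \<in> E" using p unfolding path_def by blast
    then show ?thesis using i EV by blast
  next
    case False
    then have s1: "Suc (i - 1) < length w" and s2: "Suc (i-1) = i" using i l by auto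
    have "(w!(i-1), w!(Suc (i-1))) \<in> E" using p s1 unfolding path_def by blast
    then have "(w!(i-1), w!i) \<in> E" using s2 by simp
    then show ?thesis using i EV by blast
  qed
qed

lemma no_bad: "\<not> bad a b w"
proof (induction "idx b" arbitrary: a b w rule: less_induct)
  case less
  show ?case
  proof
    assume "bad a b w"
    then obtain w where b: "bad a b w" and m: "\<forall>w'. bad a b w' \<longrightarrow> length w \<le> length w'"
      using ex_has_least_nat[of "bad a b" w length] by blast
    have l3: "3 \<le> length w" using bad_len[OF b] .
    have p: "path E w" and w0: "w!0 = a" and wl: "w!(length w - 1) = b" and ab: "lt a b" and nab: "(a,b) \<notin> E"
      and int: "\<And>i. 0 < i \<Longrightarrow> i < length w - 1 \<Longrightarrow> lt b (w!i)"
      using b unfolding bad_def by auto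
    have chl: "\<And>i j. Suc i < j \<Longrightarrow> j < length w \<Longrightarrow> (w!i, w!j) \<notin> E"
      using bad_min_chordless[OF b m] by blast
    have dw: "distinct w" using bad_min_distinct[OF b m] .
    define c where "c = w!1"
    have bc: "lt b c" using int[of 1] l3 c_def by simp
    have ac: "(a,c) \<in> E" using p l3 w0 c_def unfolding path_def by (metis One_nat_def Suc_le_lessD numeral_3_eq_3 le_less_trans lessI less_imp_le_nat)
    obtain d where d: "lt a d" "lt d b" "(d,b) \<in> E" "(d,c) \<notin> E" using F1[OF ab bc ac nab] by blast
    define J where "J = (LEAST j. 1 \<le> j \<and> j < length w \<and> (d, w!j) \<in> E)"
    have ex: "1 \<le> length w - 1 \<and> length w - 1 < length w \<and> (d, w!(length w - 1)) \<in> E" using l3 wl d by auto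
    have J: "1 \<le> J" "J < length w" "(d, w!J) \<in> E" using LeastI[of "\<lambda>j. 1 \<le> j \<and> j < length w \<and> (d, w!j) \<in> E", OF ex]
      unfolding J_def by auto
    have Jmin: "(d, w!j) \<notin> E" if jj: "1 \<le> j" "j < J" for j
    proof
      assume "(d, w!j) \<in> E"
      then have "J \<le> j" unfolding J_def using jj J(2) by (intro Least_le) auto
      then show False using jj by simp
    qed
    have J2: "2 \<le> J" using J d(4) c_def by (cases "J = 1") auto
    have ltd: "lt d (w!l)" if "1 \<le> l" "l \<le> J" for l
    proof (cases "l < length w - 1")
      case True
      then have "lt b (w!l)" using int[of l] that by simp
      then show ?thesis using prec_trans[OF dist d(2)] by blast
    next
      case False then have "l = length w - 1" using that J by auto
      then show ?thesis using wl d by simp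
    qed
    define cs where "cs = take (Suc J) w @ [d]"
    have lcs: "length cs = J + 2" using J unfolding cs_def by simp
    have csn: "cs!l = (if l \<le> J then w!l else d)" if "l < J + 2" for l
      using that J unfolding cs_def by (auto simp: nth_append)
    have pcs: "path E cs" unfolding path_def
    proof (intro allI impI)
      fix l assume "Suc l < length cs"
      then have l: "l \<le> J" using lcs by simp
      show "(cs!l, cs!Suc l) \<in> E"
      proof (cases "l = J")
        case True then show ?thesis using csn[of l] csn[of "Suc l"] J symE[OF J(3)] by simp
      next
        case False
        then have "Suc l < length w" using l J by simp
        then show ?thesis using p csn[of l] csn[of "Suc l"] l False unfolding path_def by simp
      qed
    qed
    show False
    proof (cases "(a,d) \<in> E")
      case False
      have "bad a d cs" unfolding bad_def
      proof (intro conjI allI impI)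
        show "cs \<noteq> []" using lcs by auto
        show "cs!0 = a" using csn[of 0] w0 by simp
        show "cs!(length cs - 1) = d" using csn[of "J+1"] lcs by simp
        show "lt a d" using d by simp
        show "(a,d) \<notin> E" using False .
        show "path E cs" using pcs .
        fix i assume "0 < i \<and> i < length cs - 1"
        then show "lt d (cs!i)" using csn[of i] ltd[of i] lcs by simp
      qed
      moreover have "idx d < idx b" using d(2) lt_idx by blast
      ultimately show False using less by blast
    next
      case True
      have "set cs \<subseteq> V" using path_V[OF pcs] lcs by simp
      moreover have "3 < length cs" using lcs J2 by simp
      moreover have "induced_cycle E cs"
      proof -
        have "distinct cs" unfolding cs_def
        proof -
          have "d \<notin> set (take (Suc J) w)"
          proof
            assume "d \<in> set (take (Suc J) w)"
            then obtain l where l1: "l < length (take (Suc J) w)" "take (Suc J) w ! l = d"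
              by (metis in_set_conv_nth)
            then have l: "l \<le> J" "w!l = d" using J by auto
            show False
            proof (cases "l = 0")
              case True then show ?thesis using l w0 d(1) prec_irrefl[OF dist] by simp
            next
              case False then show ?thesis using l ltd[of l] prec_irrefl[OF dist] by simp
            qed
          qed
          then show "distinct (take (Suc J) w @ [d])" using dw by simp
        qed
        moreover have adj: "(cs!i, cs!j) \<in> E \<longleftrightarrow> (j = Suc i \<or> (i = 0 \<and> j = Suc J))" if ij: "i < j" "j < J + 2" for i j
        proof (cases "j = Suc J")
          case True
          show ?thesis
          proof (cases "i = 0")
            case True then show ?thesis using csn[of 0] csn[of j] \<open>j = Suc J\<close> w0 \<open>(a,d) \<in> E\<close> by simp
          next
            case False
            show ?thesis
            proof (cases "i = J")
              case True then show ?thesis using csn[of i] csn[of j] \<open>j = Suc J\<close> J symE[OF J(3)] by auto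
            next
              case False
              then have "i < J" "1 \<le> i" using ij \<open>j = Suc J\<close> \<open>i \<noteq> 0\<close> by auto
              moreover have "(w!i, d) \<notin> E" using Jmin[of i] symE[of "w!i" d] \<open>i < J\<close> \<open>1 \<le> i\<close> by blast
              ultimately show ?thesis using csn[of i] csn[of j] \<open>j = Suc J\<close> by auto
            qed
          qed
        next
          case False
          then have jJ: "j \<le> J" using ij by simp
          show ?thesis
          proof (cases "j = Suc i")
            case True
            then have "(w!i, w!j) \<in> E" using p J jJ unfolding path_def by simp
            then show ?thesis using csn[of i] csn[of j] jJ ij True by simp
          next
            case False
            then have "(w!i, w!j) \<notin> E" using chl[of i j] ij jJ J by simp
            then show ?thesis using csn[of i] csn[of j] jJ ij False by simp
          qed
        qed
        have "(cs!i, cs!j) \<in> E \<longleftrightarrow> (j = Suc i mod length cs \<or> i = Suc j mod length cs)"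
          if ij: "i < length cs" "j < length cs" "i \<noteq> j" for i j
        proof (cases "i < j")
          case True
          have "Suc i mod length cs = Suc i" using True ij by simp
          moreover have "Suc j mod length cs = (if j = Suc J then 0 else Suc j)" using ij lcs by auto
          ultimately show ?thesis using adj[of i j] True ij lcs by auto
        next
          case False
          then have ji: "j < i" using ij by simp
          have "Suc j mod length cs = Suc j" using ji ij by simp
          moreover have "Suc i mod length cs = (if i = Suc J then 0 else Suc i)" using ij lcs by auto
          moreover have "(cs!i, cs!j) \<in> E \<longleftrightarrow> (cs!j, cs!i) \<in> E" using symE[of "cs!i" "cs!j"] symE[of "cs!j" "cs!i"] by blast
          ultimately show ?thesis using adj[of j i] ji ij lcs by auto
        qed
        ultimately show ?thesis unfolding induced_cycle_def by blast
      qed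
      ultimately show False using CH unfolding chordal_def by blast
    qed
  qed
qed

lemma bad3: "lt a b \<Longrightarrow> (a,b) \<notin> E \<Longrightarrow> lt b v \<Longrightarrow> (a,v) \<in> E \<Longrightarrow> (b,v) \<in> E \<Longrightarrow> bad a b [a,v,b]"
proof -
  assume h: "lt a b" "(a,b) \<notin> E" "lt b v" "(a,v) \<in> E" "(b,v) \<in> E"
  have p: "path E [a,v,b]" unfolding path_def
  proof (intro allI impI)
    fix i assume "Suc i < length [a,v,b]"
    then have "i = 0 \<or> i = 1" by auto
    then show "([a,v,b]!i, [a,v,b]!Suc i) \<in> E" using h symE[OF h(5)] by auto
  qed
  have q: "\<forall>i. 0 < i \<and> i < length [a,v,b] - 1 \<longrightarrow> lt b ([a,v,b]!i)"
  proof (intro allI impI)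
    fix i assume "0 < i \<and> i < length [a,v,b] - 1"
    then have "i = 1" by simp
    then show "lt b ([a,v,b]!i)" using h by simp
  qed
  show ?thesis unfolding bad_def using p q h by simp
qed

lemma PEO:
  assumes av: "lt a v" and bv: "lt b v" and e: "(a,v) \<in> E" "(b,v) \<in> E" and ab: "a \<noteq> b"
  shows "(a,b) \<in> E"
proof (rule ccontr)
  assume nab: "(a,b) \<notin> E"
  have "a \<in> set \<sigma>" "b \<in> set \<sigma>" using prec_mem[OF av] prec_mem[OF bv] by auto
  then have "lt a b \<or> lt b a" using prec_total[of a \<sigma> b] ab by blast
  then show False
  proof
    assume "lt a b"
    then show False using bad3[OF _ nab bv e] no_bad by blast
  next
    assume "lt b a"
    moreover have "(b,a) \<notin> E" using nab symE[of b a] by blast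
    ultimately show False using bad3[OF _ _ av e(2) e(1)] no_bad by blast
  qed
qed

end

lemma last_prec: "distinct xs \<Longrightarrow> y \<in> set xs \<Longrightarrow> y \<noteq> last xs \<Longrightarrow> prec xs y (last xs)"
proof -
  assume d: "distinct xs" and y: "y \<in> set xs" "y \<noteq> last xs"
  then have ne: "xs \<noteq> []" by auto
  have eq: "xs = butlast xs @ [last xs]" using ne by simp
  have "y \<in> set (butlast xs)" using y eq by (metis Un_iff empty_iff empty_set set_ConsD set_append)
  then have "prec (butlast xs @ [last xs]) y (last xs)" unfolding prec_append by simp
  then show ?thesis using eq by metis
qed

lemma lex_le_refl[simp]: "lex_le xs xs" by (simp add: lex_le_def)

lemma lex_max: "xs \<noteq> [] \<Longrightarrow> \<exists>v\<in>set xs. \<forall>w\<in>set xs. lex_le (f w) (f v)"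
proof (induction xs)
  case Nil then show ?case by simp
next
  case (Cons x xs)
  show ?case
  proof (cases "xs = []")
    case True then show ?thesis by simp
  next
    case False
    then obtain v where v: "v \<in> set xs" "\<forall>w\<in>set xs. lex_le (f w) (f v)" using Cons.IH by blast
    show ?thesis
    proof (cases "lex_le (f x) (f v)")
      case True then show ?thesis using v by auto
    next
      case False
      then have "lex_le (f v) (f x)" using lex_le_total by blast
      have "\<forall>w\<in>set xs. lex_le (f w) (f x)"
      proof
        fix w assume "w \<in> set xs"
        then have "lex_le (f w) (f v)" using v by blast
        then show "lex_le (f w) (f x)" using lex_le_trans \<open>lex_le (f v) (f x)\<close> by blast
      qed
      then show ?thesis by (intro bexI[of _ x]) auto
    qed
  qed
qed

definition LP :: "('a \<times> 'a) set \<Rightarrow> 'a list \<Rightarrow> 'a \<Rightarrow> 'a \<Rightarrow> bool" where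
  "LP E xs c p \<longleftrightarrow> (p,c) \<in> E \<and> prec xs p c \<and> (\<forall>z. prec xs p z \<and> prec xs z c \<longrightarrow> (z,c) \<notin> E)"

lemma ltree_char: "distinct xs \<Longrightarrow> (u,v) \<in> ltree E xs \<longleftrightarrow> LP E xs u v \<or> LP E xs v u"
proof -
  assume d: "distinct xs"
  have key: "LP E xs (xs!i) (xs!j) \<longleftrightarrow> (xs!j, xs!i) \<in> E \<and> (\<forall>k. j < k \<and> k < i \<longrightarrow> (xs!k, xs!i) \<notin> E)"
    if ij: "i < length xs" "j < i" for i j
  proof
    assume h: "LP E xs (xs!i) (xs!j)"
    have "(xs!k, xs!i) \<notin> E" if k: "j < k" "k < i" for k
    proof -
      have "prec xs (xs!j) (xs!k)" "prec xs (xs!k) (xs!i)" using prec_nth[OF d] ij k by auto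
      then show ?thesis using h unfolding LP_def by blast
    qed
    then show "(xs!j, xs!i) \<in> E \<and> (\<forall>k. j < k \<and> k < i \<longrightarrow> (xs!k, xs!i) \<notin> E)"
      using h unfolding LP_def by blast
  next
    assume h: "(xs!j, xs!i) \<in> E \<and> (\<forall>k. j < k \<and> k < i \<longrightarrow> (xs!k, xs!i) \<notin> E)"
    have "(z, xs!i) \<notin> E" if "prec xs (xs!j) z" "prec xs z (xs!i)" for z
    proof -
      have "z \<in> set xs" using prec_mem[OF that(1)] by blast
      then obtain k where k: "k < length xs" "xs!k = z" by (metis in_set_conv_nth)
      have "j < k" using prec_nth[OF d, of j k] that(1) k ij by simp
      moreover have "k < i" using prec_nth[OF d, of k i] that(2) k ij by simp
      ultimately have "j < k" "k < i" by auto
      then show ?thesis using h k by blast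
    qed
    then show "LP E xs (xs!i) (xs!j)" unfolding LP_def using h prec_nth[OF d] ij by auto
  qed
  show ?thesis
  proof
    assume "(u,v) \<in> ltree E xs"
    then obtain i j where ij: "i < length xs" "j < i" "(xs!j, xs!i) \<in> E"
      "\<forall>k. j < k \<and> k < i \<longrightarrow> (xs!k, xs!i) \<notin> E" "(u,v) = (xs!i, xs!j) \<or> (u,v) = (xs!j, xs!i)"
      unfolding ltree_def by blast
    then show "LP E xs u v \<or> LP E xs v u" using key[of i j] by auto
  next
    assume "LP E xs u v \<or> LP E xs v u"
    then obtain c p where cp: "LP E xs c p" "(u,v) = (c,p) \<or> (u,v) = (p,c)" by blast
    then obtain j i where ji: "j < i" "i < length xs" "xs!j = p" "xs!i = c" unfolding LP_def prec_def by blast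
    then have "(xs!j, xs!i) \<in> E \<and> (\<forall>k. j < k \<and> k < i \<longrightarrow> (xs!k, xs!i) \<notin> E)" using key[of i j] cp by simp
    then show "(u,v) \<in> ltree E xs" unfolding ltree_def using ji cp by blast
  qed
qed

context LC begin

abbreviation lb where "lb \<equiv> lbfs_label E s n"
definition gs where "gs k = greedy_search lb (rev \<sigma>) k"

lemma last_rho: "last (rev \<sigma>) = s"
  using s0 n_pos by (simp add: last_rev hd_conv_nth)

lemma pi_eq: "lexbfs_plus E (rev \<sigma>) = gs n"
  unfolding lexbfs_plus_def gs_def last_rho by simp

definition UU where "UU p = filter (\<lambda>v. v \<notin> set p) (rev \<sigma>)"
definition MM where "MM p = filter (\<lambda>v. \<forall>w \<in> set (UU p). lex_le (lb p w) (lb p v)) (UU p)"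

lemma gs_Suc: "gs (Suc k) = gs k @ [last (MM (gs k))]"
  unfolding gs_def MM_def UU_def by (simp add: Let_def)

lemma gs_len: "length (gs k) = k"
  by (induction k) (auto simp: gs_Suc, simp add: gs_def)

lemma gs0: "gs 0 = []" by (simp add: gs_def)

lemma lb_eq: "v \<noteq> s \<Longrightarrow> lb p v = map (\<lambda>j. n - Suc j) (filter (\<lambda>j. (p!j, v) \<in> E) [0..<length p])"
proof -
  assume v: "v \<noteq> s"
  have gen: "[n - Suc j. j \<leftarrow> [0..<k], Q j] = map (\<lambda>j. n - Suc j) (filter Q [0..<k])" for k and Q :: "nat \<Rightarrow> bool"
    by (induction k) auto
  show ?thesis unfolding lbfs_label_def using v gen by simp
qed

lemma lb_sorted: "length p \<le> n \<Longrightarrow> sorted_wrt (>) (map (\<lambda>j. n - Suc j) (filter Q [0..<length p]))"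
proof -
  assume l: "length p \<le> n"
  have "sorted_wrt (\<lambda>x y. n - Suc y < n - Suc x) [0..<length p]"
    unfolding sorted_wrt_iff_nth_less using l by auto
  then show ?thesis by (simp add: sorted_wrt_map sorted_wrt_filter)
qed
  

lemma cardV: "card V = n" using distinct_card[OF dist] setS by simp

lemma lb_nil: "lb [] v = (if v = s then [n] else [])"
  unfolding lbfs_label_def by simp

definition DC where "DC p \<longleftrightarrow> (\<forall>w\<in>set p. \<forall>u. (u,w) \<in> E \<longrightarrow> lt u w \<longrightarrow> u \<in> set p)"

lemma inv: "k \<le> n \<Longrightarrow> distinct (gs k) \<and> set (gs k) \<subseteq> V \<and> (0 < k \<longrightarrow> gs k ! 0 = s) \<and> DC (gs k)"
proof (induction k)
  case 0 then show ?case by (simp add: gs0 DC_def)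
next
  case (Suc k)
  define p where "p = gs k"
  have IH: "distinct p" "set p \<subseteq> V" "0 < k \<longrightarrow> p ! 0 = s" "DC p" using Suc p_def by auto
  have lp: "length p = k" using gs_len p_def by simp
  have setU: "set (UU p) = V - set p" unfolding UU_def using setS by auto
  have cp: "card (set p) = k" using distinct_card[OF IH(1)] lp by simp
  have "V - set p \<noteq> {}"
  proof
    assume "V - set p = {}"
    then have "V \<subseteq> set p" by blast
    then have "card V \<le> card (set p)" by (intro card_mono) auto
    then show False using cp cardV Suc.prems by simp
  qed
  then have "UU p \<noteq> []" using setU by auto
  then obtain v0 where v0: "v0 \<in> set (UU p)" "\<forall>w\<in>set (UU p). lex_le (lb p w) (lb p v0)"
    using lex_max[of "UU p" "lb p"] by blast
  then have "v0 \<in> set (MM p)" unfolding MM_def by simp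
  then have Mne: "MM p \<noteq> []" by auto
  define x where "x = last (MM p)"
  have xM: "x \<in> set (MM p)" using Mne x_def by simp
  then have xU: "x \<in> set (UU p)" and xmax: "\<forall>w\<in>set (UU p). lex_le (lb p w) (lb p x)" unfolding MM_def by auto
  then have xV: "x \<in> V" "x \<notin> set p" using setU by auto
  have gsS: "gs (Suc k) = p @ [x]" using gs_Suc p_def x_def by simp
  have dM: "distinct (MM p)" unfolding MM_def UU_def using dist by simp
  have x0: "k = 0 \<Longrightarrow> x = s"
  proof (rule ccontr)
    assume k0: "k = 0" and xs: "x \<noteq> s"
    then have "p = []" using lp by simp
    moreover have "s \<in> set (UU p)" using setU sV \<open>p = []\<close> by simp
    ultimately have "lex_le [n] []" using xmax xs lb_nil by fastforce
    then show False by simp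
  qed
  have DCx: "y \<in> set p" if y: "(y,x) \<in> E" "lt y x" for y
  proof (rule ccontr)
    assume yp: "y \<notin> set p"
    show False
    proof (cases "k = 0")
      case True
      then have "x = s" using x0 by simp
      then show False using y lt_idx by simp
    next
      case False
      then have "0 < length p" using lp by simp
      then have sp: "s \<in> set p" using IH(3) lp False nth_mem[of 0 p] by auto
      have xs: "x \<noteq> s" using sp xV by auto
      have yV: "y \<in> V" using y EV by blast
      have ys: "y \<noteq> s" using sp yp by auto
      have sub: "set (lb p x) \<subseteq> set (lb p y)"
      proof
        fix t assume "t \<in> set (lb p x)"
        then obtain j where j: "j < k" "(p!j, x) \<in> E" "t = n - Suc j" using lb_eq[OF xs] lp by auto
        define z where "z = p!j"
        have zp: "z \<in> set p" using j lp z_def by simp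
        then have zV: "z \<in> V" using IH by auto
        have zx: "z \<noteq> x" "z \<noteq> y" using zp xV yp by auto
        have "lt z x"
        proof (rule ccontr)
          assume "\<not> lt z x"
          then have "lt x z" using prec_total[of z \<sigma> x] zV xV setS zx by blast
          moreover have "(x,z) \<in> E" using j symE[of z x] z_def by blast
          ultimately have "x \<in> set p" using IH(4) zp unfolding DC_def by blast
          then show False using xV by simp
        qed
        then have "(z,y) \<in> E" using PEO[of z x y] y j z_def zx by blast
        then show "t \<in> set (lb p y)" using lb_eq[OF ys] lp j z_def by auto
      qed
      have lpn: "length p \<le> n" using lp Suc.prems by simp
      have sx: "sorted_wrt (>) (lb p x)" unfolding lb_eq[OF xs] by (rule lb_sorted[OF lpn])
      have sy: "sorted_wrt (>) (lb p y)" unfolding lb_eq[OF ys] by (rule lb_sorted[OF lpn])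
      have "lex_le (lb p x) (lb p y)" using lex_le_subset[OF sx sy sub] .
      moreover have yU: "y \<in> set (UU p)" using setU yV yp by simp
      ultimately have eq: "lb p y = lb p x" using xmax lex_le_antisym by blast
      have "y \<in> set (MM p)" unfolding MM_def using yU xmax eq by simp
      moreover have "y \<noteq> x" using y prec_irrefl[OF dist] by blast
      ultimately have "prec (MM p) y x" using last_prec[OF dM] x_def by blast
      then have "prec (rev \<sigma>) y x" unfolding MM_def UU_def prec_filter by blast
      then have "lt x y" unfolding prec_rev .
      then show False using y prec_asym[OF dist] by blast
    qed
  qed
  have "distinct (gs (Suc k))" using gsS IH xV by simp
  moreover have "set (gs (Suc k)) \<subseteq> V" using gsS IH xV by simp
  moreover have "gs (Suc k) ! 0 = s"
  proof (cases "k = 0")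
    case True then show ?thesis using gsS x0 lp by simp
  next
    case False then show ?thesis using gsS IH lp by (simp add: nth_append)
  qed
  moreover have "DC (gs (Suc k))" unfolding DC_def gsS
  proof (intro ballI allI impI)
    fix w u assume w: "w \<in> set (p @ [x])" and u: "(u,w) \<in> E" "lt u w"
    show "u \<in> set (p @ [x])"
    proof (cases "w \<in> set p")
      case True then show ?thesis using IH(4) u unfolding DC_def by auto
    next
      case False then have "w = x" using w by simp
      then show ?thesis using DCx u by simp
    qed
  qed
  ultimately show ?case by blast
qed


lemma gs_prefix: "k \<le> m \<Longrightarrow> gs k = take k (gs m)"
proof (induction m)
  case 0 then show ?case by (simp add: gs0)
next
  case (Suc m)
  show ?case
  proof (cases "k = Suc m")
    case True then show ?thesis using gs_len by simp
  next
    case False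
    then have "k \<le> m" using Suc.prems by simp
    then show ?thesis using Suc.IH gs_Suc gs_len by simp
  qed
qed

definition pi where "pi = gs n"

lemma pi_dist: "distinct pi" and pi_set: "set pi = V" and pi_len: "length pi = n"
proof -
  show d: "distinct pi" using inv[of n] pi_def by simp
  show l: "length pi = n" using gs_len pi_def by simp
  have sub: "set pi \<subseteq> V" using inv[of n] pi_def by simp
  have "card (set pi) = card V" using distinct_card[OF d] l cardV by simp
  then show "set pi = V" using sub finV by (simp add: card_subset_eq)
qed

lemma orient1: "(u,w) \<in> E \<Longrightarrow> lt u w \<Longrightarrow> prec pi u w"
proof (rule ccontr)
  assume e: "(u,w) \<in> E" and l: "lt u w" and np: "\<not> prec pi u w"
  have uV: "u \<in> V" "w \<in> V" using e EV by auto
  have "u \<noteq> w" using l prec_irrefl[OF dist] by blast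
  then have "prec pi w u" using np prec_total[of u pi w] uV pi_set by blast
  then obtain i j where ij: "i < j" "j < length pi" "pi!i = w" "pi!j = u" unfolding prec_def by blast
  have g: "gs (Suc i) = take (Suc i) pi" using gs_prefix[of "Suc i" n] ij pi_len pi_def by simp
  have "w \<in> set (gs (Suc i))" unfolding g using ij by (simp add: in_set_conv_nth) (metis lessI nth_take)
  moreover have "DC (gs (Suc i))" using inv[of "Suc i"] ij pi_len by simp
  ultimately have "u \<in> set (take (Suc i) pi)" using e l g unfolding DC_def by metis
  then obtain l where l: "l < Suc i" "l < length pi" "pi!l = u" by (auto simp: in_set_conv_nth)
  then have "l = j" using ij pi_dist nth_eq_iff_index_eq by metis
  then show False using l ij by simp
qed

lemma orient: "(u,w) \<in> E \<Longrightarrow> prec pi u w \<longleftrightarrow> lt u w"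
proof
  assume e: "(u,w) \<in> E" and p: "prec pi u w"
  have uV: "u \<in> V" "w \<in> V" using e EV by auto
  have "u \<noteq> w" using p prec_irrefl[OF pi_dist] by blast
  show "lt u w"
  proof (rule ccontr)
    assume "\<not> lt u w"
    then have "lt w u" using prec_total[of u \<sigma> w] uV setS \<open>u \<noteq> w\<close> by blast
    then have "prec pi w u" using orient1 symE[OF e] by blast
    then show False using p prec_asym[OF pi_dist] by blast
  qed
next
  assume "(u,w) \<in> E" "lt u w" then show "prec pi u w" using orient1 by blast
qed

lemma LP_eq: "LP E pi c p \<longleftrightarrow> LP E \<sigma> c p"
proof
  assume h: "LP E pi c p"
  then have e: "(p,c) \<in> E" and pc: "lt p c" using orient unfolding LP_def by auto
  have "(z,c) \<notin> E" if z: "lt p z" "lt z c" for z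
  proof
    assume zc: "(z,c) \<in> E"
    have "z \<noteq> p" using z prec_irrefl[OF dist] by blast
    then have "(p,z) \<in> E" using PEO[OF pc z(2) e zc] by blast
    then have "prec pi p z" using orient z by blast
    moreover have "prec pi z c" using orient zc z by blast
    ultimately show False using h zc unfolding LP_def by blast
  qed
  then show "LP E \<sigma> c p" unfolding LP_def using e pc by blast
next
  assume h: "LP E \<sigma> c p"
  then have e: "(p,c) \<in> E" and pc: "lt p c" unfolding LP_def by auto
  have ppc: "prec pi p c" using orient e pc by blast
  have "(z,c) \<notin> E" if z: "prec pi p z" "prec pi z c" for z
  proof
    assume zc: "(z,c) \<in> E"
    have zc': "lt z c" using orient zc z by blast
    have "z \<noteq> p" using z prec_irrefl[OF pi_dist] by blast
    then have pz: "(p,z) \<in> E" using PEO[OF pc zc' e zc] by blast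
    then have "lt p z" using orient z by blast
    then show False using h zc zc' unfolding LP_def by blast
  qed
  then show "LP E pi c p" unfolding LP_def using e ppc by blast
qed

lemma T_eq: "ltree E (lexbfs_plus E (rev \<sigma>)) = ltree E \<sigma>"
proof -
  have "ltree E pi = ltree E \<sigma>"
  proof (intro set_eqI)
    fix x :: "'a \<times> 'a"
    obtain u v where x: "x = (u,v)" by (cases x)
    show "x \<in> ltree E pi \<longleftrightarrow> x \<in> ltree E \<sigma>"
      unfolding x ltree_char[OF pi_dist] ltree_char[OF dist] LP_eq by simp
  qed
  then show ?thesis using pi_eq pi_def by simp
qed

end

context L begin

definition par where "par v = \<sigma>!(GREATEST j. j < idx v \<and> (\<sigma>!j, v) \<in> E)"

lemma par_props:
  assumes v: "v \<in> V" "v \<noteq> s"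
  shows "(par v, v) \<in> E" "lt (par v) v" "\<And>z. lt (par v) z \<Longrightarrow> lt z v \<Longrightarrow> (z,v) \<notin> E" "par v \<in> V"
proof -
  define i where "i = idx v"
  have i: "i < n" "\<sigma>!i = v" using idx[OF v(1)] i_def by auto
  have i0: "0 < i" using v i idx_s s0 by (metis gr0I)
  obtain j0 where j0: "j0 < i" "(\<sigma>!j0, \<sigma>!i) \<in> E" using search[OF i0 i(1)] by blast
  define jm where "jm = (GREATEST j. j < idx v \<and> (\<sigma>!j, v) \<in> E)"
  have ex: "j0 < idx v \<and> (\<sigma>!j0, v) \<in> E" using j0 i i_def by simp
  have bnd: "\<forall>y. y < idx v \<and> (\<sigma>!y, v) \<in> E \<longrightarrow> y \<le> i" using i_def by simp
  have Pjm: "jm < idx v \<and> (\<sigma>!jm, v) \<in> E" unfolding jm_def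
    using GreatestI_nat[of "\<lambda>j. j < idx v \<and> (\<sigma>!j, v) \<in> E" j0 i] ex bnd by blast
  then have jm: "jm < i" "(\<sigma>!jm, v) \<in> E" using i_def by auto
  have jmax: "j \<le> jm" if "j < i" "(\<sigma>!j, v) \<in> E" for j
    unfolding jm_def using Greatest_le_nat[of "\<lambda>j. j < idx v \<and> (\<sigma>!j, v) \<in> E" j i] that bnd i_def by blast
  have pv: "par v = \<sigma>!jm" unfolding par_def jm_def ..
  show "(par v, v) \<in> E" using pv jm by simp
  show "lt (par v) v" using pv jm i prec_nth[OF dist] by (metis order.strict_trans)
  show "par v \<in> V" using pv jm i by simp
  fix z assume z: "lt (par v) z" "lt z v"
  show "(z,v) \<notin> E"
  proof
    assume e: "(z,v) \<in> E"
    have zV: "z \<in> V" using prec_mem[OF z(2)] setS by blast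
    have "idx z < i" using z(2) lt_idx i_def by blast
    then have "idx z \<le> jm" using jmax e idx[OF zV] by metis
    moreover have "jm < idx z" using z(1) lt_idx pv jm i by (metis idx_nth order.strict_trans)
    ultimately show False by simp
  qed
qed

lemma LP_par: "LP E \<sigma> c p \<longleftrightarrow> c \<in> V \<and> c \<noteq> s \<and> p = par c"
proof
  assume h: "LP E \<sigma> c p"
  then have e: "(p,c) \<in> E" and pc: "lt p c" and nz: "\<And>z. lt p z \<Longrightarrow> lt z c \<Longrightarrow> (z,c) \<notin> E"
    unfolding LP_def by auto
  have cV: "c \<in> V" "p \<in> V" using e EV by auto
  have cs: "c \<noteq> s" using pc lt_idx by auto
  note P = par_props[OF cV(1) cs]
  have "p = par c"
  proof (rule ccontr)
    assume ne: "p \<noteq> par c"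
    have "lt p (par c) \<or> lt (par c) p" using prec_total[of p \<sigma> "par c"] ne cV P(4) setS by blast
    then show False
    proof
      assume "lt p (par c)" then show False using nz P(1,2) by blast
    next
      assume "lt (par c) p" then show False using P(3) pc e by blast
    qed
  qed
  then show "c \<in> V \<and> c \<noteq> s \<and> p = par c" using cV cs by simp
next
  assume "c \<in> V \<and> c \<noteq> s \<and> p = par c"
  then show "LP E \<sigma> c p" unfolding LP_def using par_props[of c] by blast
qed

abbreviation T where "T \<equiv> ltree E \<sigma>"

lemma Tchar: "(x,y) \<in> T \<longleftrightarrow> (x \<in> V \<and> x \<noteq> s \<and> y = par x) \<or> (y \<in> V \<and> y \<noteq> s \<and> x = par y)"
  unfolding ltree_char[OF dist] LP_par by blast

definition Rp where "Rp = {(v, par v) | v. v \<in> V \<and> v \<noteq> s}"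

lemma Rp_sv: "single_valued Rp" unfolding Rp_def single_valued_def by blast

lemma Rp_lt: "(v,a) \<in> Rp\<^sup>+ \<Longrightarrow> lt a v"
proof (induction rule: trancl_induct)
  case (base y) then show ?case using par_props unfolding Rp_def by blast
next
  case (step y z)
  then have "lt z y" using par_props unfolding Rp_def by blast
  then show ?case using step prec_trans[OF dist] by blast
qed

lemma Rp_V: "(v,a) \<in> Rp \<Longrightarrow> v \<in> V \<and> a \<in> V \<and> v \<noteq> s \<and> a = par v"
  using par_props unfolding Rp_def by blast

lemma chain: "(z,a) \<in> Rp\<^sup>* \<Longrightarrow> (z,b) \<in> Rp\<^sup>* \<Longrightarrow> (a,b) \<in> Rp\<^sup>* \<or> (b,a) \<in> Rp\<^sup>*"
  using single_valued_confluent[OF Rp_sv] by blast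

lemma Rp_par: "v \<in> V \<Longrightarrow> v \<noteq> s \<Longrightarrow> (v, par v) \<in> Rp" unfolding Rp_def by blast

lemma rtrancl_lt: "(v,a) \<in> Rp\<^sup>* \<Longrightarrow> v = a \<or> lt a v"
  using Rp_lt by (metis rtrancl_eq_or_trancl)

lemma stack: "1 \<le> i \<Longrightarrow> i \<le> n \<Longrightarrow> u \<in> set (take i \<sigma>) \<Longrightarrow> c \<in> V \<Longrightarrow> c \<notin> set (take i \<sigma>) \<Longrightarrow> (u,c) \<in> E
   \<Longrightarrow> (\<sigma>!(i-1), u) \<in> Rp\<^sup>*"
proof (induction i arbitrary: u c rule: nat_induct_at_least)
  case base
  then have "u = \<sigma>!0" using n_pos by (cases \<sigma>) auto
  then show ?case by simp
next
  case (Suc i)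
  define v where "v = \<sigma>!i"
  have i: "i < n" using Suc by simp
  have vV: "v \<in> V" using i v_def by simp
  have vs: "v \<noteq> s" using i Suc.hyps idx_nth[OF i] v_def idx_s by (metis not_one_le_zero)
  note P = par_props[OF vV vs]
  have tk: "take (Suc i) \<sigma> = take i \<sigma> @ [v]" using i v_def by (simp add: take_Suc_conv_app_nth)
  show ?case
  proof (cases "u = v")
    case True then show ?thesis using v_def by simp
  next
    case False
    then have ut: "u \<in> set (take i \<sigma>)" using Suc.prems tk by simp
    have ct: "c \<notin> set (take i \<sigma>)" using Suc.prems tk by simp
    have IHu: "(\<sigma>!(i-1), u) \<in> Rp\<^sup>*" using Suc.IH[OF _ ut Suc.prems(3) ct Suc.prems(5)] i by simp
    have qt: "par v \<in> set (take i \<sigma>)" using P(2,4) in_take lt_idx v_def i by simp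
    have vt: "v \<notin> set (take i \<sigma>)" using in_take vV v_def i by simp
    have IHq: "(\<sigma>!(i-1), par v) \<in> Rp\<^sup>*" using Suc.IH[OF _ qt vV vt P(1)] i by simp
    have vq: "(v, par v) \<in> Rp" using Rp_par vV vs by simp
    from chain[OF IHu IHq] show ?thesis
    proof
      assume "(u, par v) \<in> Rp\<^sup>*"
      then have "u = par v \<or> lt (par v) u" using rtrancl_lt by blast
      then show ?thesis
      proof
        assume "u = par v" then show ?thesis using vq v_def by simp
      next
        assume qu: "lt (par v) u"
        have uV: "u \<in> V" using Suc.prems EV by blast
        have uv: "lt u v" using ut in_take uV lt_idx v_def i vV by simp
        have nuv: "(u,v) \<notin> E" using P(3) qu uv by blast
        have vc: "lt v c" using Suc.prems(3,4) in_take lt_idx vV v_def i idx by (metis idx_nth not_less_eq)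
        obtain d where d: "lt u d" "lt d v" "(d,v) \<in> E" using F1[OF uv vc Suc.prems(5) nuv] by blast
        have "lt (par v) d" using qu d prec_trans[OF dist] by blast
        then show ?thesis using P(3) d by blast
      qed
    next
      assume "(par v, u) \<in> Rp\<^sup>*"
      then show ?thesis using vq v_def by simp
    qed
  qed
qed


lemma idx_pos: "v \<in> V \<Longrightarrow> v \<noteq> s \<Longrightarrow> 0 < idx v"
  using idx idx_s s0 by (metis gr0I)

lemma EA: "(u,w) \<in> E \<Longrightarrow> lt u w \<Longrightarrow> (w,u) \<in> Rp\<^sup>+"
proof -
  assume e: "(u,w) \<in> E" and uw: "lt u w"
  have V: "u \<in> V" "w \<in> V" using e EV by auto
  have ws: "w \<noteq> s" using uw lt_idx by auto
  define i where "i = idx w"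
  have i: "1 \<le> i" "i \<le> n" using idx_pos[OF V(2) ws] idx[OF V(2)] i_def by auto
  have ut: "u \<in> set (take i \<sigma>)" using in_take V uw lt_idx i_def by simp
  have wt: "w \<notin> set (take i \<sigma>)" using in_take V i_def by simp
  note P = par_props[OF V(2) ws]
  have qt: "par w \<in> set (take i \<sigma>)" using in_take P(4) P(2) lt_idx i_def by simp
  have a: "(\<sigma>!(i-1), u) \<in> Rp\<^sup>*" using stack[OF i ut V(2) wt e] .
  have b: "(\<sigma>!(i-1), par w) \<in> Rp\<^sup>*" using stack[OF i qt V(2) wt P(1)] .
  have wq: "(w, par w) \<in> Rp" using Rp_par V ws by simp
  from chain[OF a b] show "(w,u) \<in> Rp\<^sup>+"
  proof
    assume "(u, par w) \<in> Rp\<^sup>*"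
    then have "u = par w \<or> lt (par w) u" using rtrancl_lt by blast
    then show ?thesis
    proof
      assume "u = par w" then show ?thesis using wq by simp
    next
      assume "lt (par w) u" then show ?thesis using P(3) uw e by blast
    qed
  next
    assume "(par w, u) \<in> Rp\<^sup>*"
    then show ?thesis using wq by (meson rtrancl_into_trancl2)
  qed
qed

lemma noesc:
  assumes i: "1 \<le> i" "i < n" and y: "y \<in> set (take i \<sigma>)" "lt (par (\<sigma>!i)) y"
    and x: "x \<in> V" "x \<notin> set (take i \<sigma>)" and yx: "(y,x) \<in> T"
  shows False
proof -
  define v where "v = \<sigma>!i"
  have vV: "v \<in> V" using i v_def by simp
  have vs: "v \<noteq> s" using i idx_nth[OF i(2)] v_def idx_s by (metis not_one_le_zero)
  note P = par_props[OF vV vs]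
  have yV: "y \<in> V" using y setS by (meson in_set_takeD)
  have yi: "idx y < i" using y in_take yV by simp
  from yx[unfolded Tchar] show False
  proof
    assume h: "y \<in> V \<and> y \<noteq> s \<and> x = par y"
    then have "lt x y" using par_props by blast
    then have "idx x < i" using yi lt_idx by simp
    then show False using x in_take by simp
  next
    assume h: "x \<in> V \<and> x \<noteq> s \<and> y = par x"
    have xv: "x \<noteq> v" using h y(2) v_def prec_irrefl[OF dist] by blast
    have "idx x \<noteq> i" using xv v_def idx[OF x(1)] by metis
    then have "i < idx x" using x in_take by simp
    then have vx: "lt v x" using lt_idx vV x v_def i by simp
    have yxE: "(y,x) \<in> E" using par_props h by blast
    have yv: "lt y v" using lt_idx yV vV yi v_def i by simp
    have nyv: "(y,v) \<notin> E" using P(3) y(2) yv v_def by blast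
    obtain d where d: "lt y d" "lt d v" "(d,v) \<in> E" using F1[OF yv vx yxE nyv] by blast
    have "lt (par v) d" using y(2) d(1) prec_trans[OF dist] v_def by blast
    then show False using P(3) d by blast
  qed
qed

lemma Tcross: "A \<subseteq> V \<Longrightarrow> s \<in> A \<Longrightarrow> w \<in> V \<Longrightarrow> w \<notin> A \<Longrightarrow> \<exists>y. y \<in> V \<and> y \<notin> A \<and> y \<noteq> s \<and> par y \<in> A"
proof (induction "idx w" arbitrary: w rule: less_induct)
  case less
  have ws: "w \<noteq> s" using less by auto
  note P = par_props[OF less.prems(3) ws]
  show ?case
  proof (cases "par w \<in> A")
    case True then show ?thesis using less ws by blast
  next
    case False
    have "idx (par w) < idx w" using P(2) lt_idx by simp
    then show ?thesis using less.hyps[OF _ less.prems(1,2) P(4) False] by blast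
  qed
qed

end

fun pdisj :: "'a set list \<Rightarrow> bool" where
  "pdisj [] = True"
| "pdisj (C # Q) = (C \<inter> \<Union>(set Q) = {} \<and> pdisj Q)"

fun bef :: "'a set list \<Rightarrow> 'a \<Rightarrow> 'a \<Rightarrow> bool" where
  "bef [] x y = False"
| "bef (C # Q) x y = ((x \<in> C \<and> y \<in> \<Union>(set Q)) \<or> bef Q x y)"

definition same :: "'a set list \<Rightarrow> 'a \<Rightarrow> 'a \<Rightarrow> bool" where
  "same Q x y \<longleftrightarrow> (\<exists>C\<in>set Q. x \<in> C \<and> y \<in> C)"

definition piece where "piece C S = (if C \<inter> S \<noteq> {} \<and> C - S \<noteq> {} then [C \<inter> S, C - S] else [C])"

lemma refine_Nil[simp]: "refine [] S = []" by (simp add: refine_def)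
lemma refine_Cons: "refine (C # Q) S = piece C S @ refine Q S"
  by (simp add: refine_def piece_def)

lemma piece_Un[simp]: "\<Union>(set (piece C S)) = C" by (auto simp: piece_def)

lemma refine_Un: "\<Union>(set (refine Q S)) = \<Union>(set Q)"
  by (induction Q) (auto simp: refine_Cons)

lemma pdisj_append: "pdisj (xs @ ys) \<longleftrightarrow> pdisj xs \<and> pdisj ys \<and> \<Union>(set xs) \<inter> \<Union>(set ys) = {}"
  by (induction xs) auto

lemma refine_pdisj: "pdisj Q \<Longrightarrow> pdisj (refine Q S)"
proof (induction Q)
  case Nil then show ?case by simp
next
  case (Cons C Q)
  have "pdisj (piece C S)" by (auto simp: piece_def)
  then show ?case using Cons by (auto simp: refine_Cons pdisj_append refine_Un)
qed

lemma bef_append: "bef (A @ B) x y \<longleftrightarrow> bef A x y \<or> (x \<in> \<Union>(set A) \<and> y \<in> \<Union>(set B)) \<or> bef B x y"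
  by (induction A) auto

lemma same_append: "same (A @ B) x y \<longleftrightarrow> same A x y \<or> same B x y"
  unfolding same_def by auto

lemma same_Cons: "same (C # Q) x y \<longleftrightarrow> (x \<in> C \<and> y \<in> C) \<or> same Q x y"
  unfolding same_def by auto

lemma R1: "bef Q x y \<Longrightarrow> bef (refine Q S) x y"
proof (induction Q)
  case Nil then show ?case by simp
next
  case (Cons C Q)
  then show ?case unfolding refine_Cons bef_append refine_Un by auto
qed

lemma R2: "same Q x y \<Longrightarrow> x \<in> S \<Longrightarrow> y \<notin> S \<Longrightarrow> bef (refine Q S) x y"
proof (induction Q)
  case Nil then show ?case by (simp add: same_def)
next
  case (Cons C Q)
  show ?case
  proof (cases "x \<in> C \<and> y \<in> C")
    case True
    then have "piece C S = [C \<inter> S, C - S]" using Cons.prems unfolding piece_def by auto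
    then have "bef (piece C S) x y" using True Cons.prems by simp
    then show ?thesis unfolding refine_Cons bef_append by simp
  next
    case False
    then have "same Q x y" using Cons.prems unfolding same_Cons by blast
    then show ?thesis using Cons unfolding refine_Cons bef_append by simp
  qed
qed

lemma R3: "same Q x y \<Longrightarrow> (x \<in> S \<longleftrightarrow> y \<in> S) \<Longrightarrow> same (refine Q S) x y"
proof (induction Q)
  case Nil then show ?case by (simp add: same_def)
next
  case (Cons C Q)
  show ?case
  proof (cases "x \<in> C \<and> y \<in> C")
    case True
    then have "same (piece C S) x y" using Cons.prems unfolding piece_def same_def by auto
    then show ?thesis unfolding refine_Cons same_append by simp
  next
    case False
    then have "same Q x y" using Cons.prems unfolding same_Cons by blast
    then show ?thesis using Cons unfolding refine_Cons same_append by simp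
  qed
qed

definition flat :: "'a list \<Rightarrow> 'a set list \<Rightarrow> 'a list" where
  "flat xs Q = concat (map (\<lambda>C. filter (\<lambda>v. v \<in> C) xs) Q)"

lemma flat_Cons: "flat xs (C # Q) = filter (\<lambda>v. v \<in> C) xs @ flat xs Q"
  by (simp add: flat_def)

lemma flat_set: "set (flat xs Q) = set xs \<inter> \<Union>(set Q)"
  by (induction Q) (auto simp: flat_def)

lemma flat_dist: "distinct xs \<Longrightarrow> pdisj Q \<Longrightarrow> distinct (flat xs Q)"
  by (induction Q) (auto simp: flat_Cons flat_set flat_def)

lemma flat_bef: "bef Q x y \<Longrightarrow> x \<in> set xs \<Longrightarrow> y \<in> set xs \<Longrightarrow> prec (flat xs Q) x y"
proof (induction Q)
  case Nil then show ?case by simp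
next
  case (Cons C Q)
  then show ?case unfolding flat_Cons prec_append by (auto simp: flat_set)
qed

lemma flat_same: "same Q x y \<Longrightarrow> prec xs x y \<Longrightarrow> prec (flat xs Q) x y"
proof (induction Q)
  case Nil then show ?case by (simp add: same_def)
next
  case (Cons C Q)
  show ?case
  proof (cases "x \<in> C \<and> y \<in> C")
    case True
    then have "prec (filter (\<lambda>v. v \<in> C) xs) x y" using Cons.prems by (simp add: prec_filter)
    then show ?thesis unfolding flat_Cons prec_append by simp
  next
    case False
    then have "same Q x y" using Cons.prems unfolding same_Cons by blast
    then show ?thesis using Cons unfolding flat_Cons prec_append by simp
  qed
qed

lemma nth_notin_take: "distinct xs \<Longrightarrow> k < length xs \<Longrightarrow> xs!k \<notin> set (take k xs)"
proof
  assume d: "distinct xs" and k: "k < length xs" and m: "xs!k \<in> set (take k xs)"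
  then obtain l where "l < length (take k xs)" "take k xs ! l = xs!k" by (metis in_set_conv_nth)
  then have "l < k" "xs!l = xs!k" by auto
  then show False using d k nth_eq_iff_index_eq by (metis order.strict_trans less_irrefl)
qed

lemma prec_nth_take: "distinct xs \<Longrightarrow> k < length xs \<Longrightarrow> prec xs d (xs!k) \<Longrightarrow> d \<in> set (take k xs)"
proof -
  assume d: "distinct xs" and k: "k < length xs" and p: "prec xs d (xs!k)"
  then obtain i j where ij: "i < j" "j < length xs" "xs!i = d" "xs!j = xs!k" unfolding prec_def by blast
  then have "j = k" using d k nth_eq_iff_index_eq by metis
  then show ?thesis using ij by (metis in_set_conv_nth length_take min_less_iff_conj nth_take order.strict_trans)
qed

context L begin

lemma cardV': "card V = n" using distinct_card[OF dist] setS by simp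

lemma bfs_basic: "is_bfs_order V T s b \<Longrightarrow> distinct b \<and> set b = V \<and> b \<noteq> [] \<and> b!0 = s \<and> length b = n"
proof -
  assume B: "is_bfs_order V T s b"
  then have d: "distinct b" "set b = V" "b \<noteq> []" "b!0 = s" unfolding is_bfs_order_def vertex_order_def by auto
  then have "length b = n" using distinct_card[OF d(1)] cardV' by simp
  then show ?thesis using d by simp
qed

lemma bfs_adj: assumes B: "is_bfs_order V T s b" and i: "0 < i" "i < length b"
  shows "\<exists>x\<in>set (take i b). (x, b!i) \<in> T"
proof -
  note bb = bfs_basic[OF B]
  define p where "p = take i b"
  define P where "P = (\<lambda>x. \<exists>w\<in>V - set p. (x,w) \<in> T)"
  have h: "(hd (filter P p), b!i) \<in> T" using B i unfolding is_bfs_order_def P_def p_def Let_def by blast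
  have A: "set p \<subseteq> V" "s \<in> set p" "b!i \<in> V" "b!i \<notin> set p"
    using bb i nth_notin_take[of b i] unfolding p_def
    by (auto dest: in_set_takeD simp: in_set_conv_nth)
  obtain y where y: "y \<in> V" "y \<notin> set p" "y \<noteq> s" "par y \<in> set p" using Tcross[OF A] by blast
  have "(par y, y) \<in> T" using Tchar y by blast
  then have "P (par y)" unfolding P_def using y by blast
  then have "filter P p \<noteq> []" using y(4) by (metis filter_empty_conv)
  then have "hd (filter P p) \<in> set (filter P p)" by (rule hd_in_set)
  then have "hd (filter P p) \<in> set p" by simp
  then show ?thesis using h p_def by blast
qed

lemma bfs_closed: "is_bfs_order V T s b \<Longrightarrow> k \<le> length b \<Longrightarrow> y \<in> set (take k b) \<Longrightarrow> y \<noteq> s \<Longrightarrow> par y \<in> set (take k b)"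
proof (induction k arbitrary: y)
  case 0 then show ?case by simp
next
  case (Suc k)
  note bb = bfs_basic[OF Suc.prems(1)]
  have k: "k < length b" using Suc.prems by simp
  have tk: "take (Suc k) b = take k b @ [b!k]" using k by (simp add: take_Suc_conv_app_nth)
  show ?case
  proof (cases "y \<in> set (take k b)")
    case True then show ?thesis using Suc tk by simp
  next
    case False
    then have y: "y = b!k" using Suc.prems tk by simp
    then have k0: "0 < k" using Suc.prems bb by (metis gr0I)
    obtain x where x: "x \<in> set (take k b)" "(x, b!k) \<in> T" using bfs_adj[OF Suc.prems(1) k0 k] by blast
    from x(2)[unfolded Tchar] show ?thesis
    proof
      assume "x \<in> V \<and> x \<noteq> s \<and> b!k = par x"
      then have "b!k \<in> set (take k b)" using Suc.IH[OF Suc.prems(1) _ x(1)] k by simp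
      then show ?thesis using nth_notin_take[OF _ k] bb by blast
    next
      assume "b!k \<in> V \<and> b!k \<noteq> s \<and> x = par (b!k)"
      then show ?thesis using x(1) y tk by simp
    qed
  qed
qed

lemma bfs_par: assumes B: "is_bfs_order V T s b" and y: "y \<in> V" "y \<noteq> s" shows "prec b (par y) y"
proof -
  note bb = bfs_basic[OF B]
  obtain k where k: "k < length b" "b!k = y" using y bb by (metis in_set_conv_nth)
  have tk: "take (Suc k) b = take k b @ [b!k]" using k by (simp add: take_Suc_conv_app_nth)
  have "par y \<in> set (take (Suc k) b)" using bfs_closed[OF B, of "Suc k" y] k y tk by simp
  moreover have "par y \<noteq> y" using par_props[OF y] prec_irrefl[OF dist] by metis
  ultimately have "par y \<in> set (take k b)" using tk k by simp
  then obtain l where "l < length (take k b)" "take k b ! l = par y" by (metis in_set_conv_nth)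
  then have lk: "l < k" "b!l = par y" by auto
  have "prec b (b!l) (b!k)" using prec_nth[OF conjunct1[OF bb], of l k] lk k by simp
  then show ?thesis using lk k by simp
qed

lemma bfs_anc: assumes B: "is_bfs_order V T s b" shows "(v,a) \<in> Rp\<^sup>+ \<Longrightarrow> prec b a v"
proof (induction rule: trancl_induct)
  case (base y) then show ?case using Rp_V bfs_par[OF B] by blast
next
  case (step y z)
  then have "prec b z y" using Rp_V bfs_par[OF B] by blast
  have db: "distinct b" using bfs_basic[OF B] by blast
  show ?case using prec_trans[OF db \<open>prec b z y\<close> step.IH] .
qed


definition Sv where "Sv b v = {w. (v,w) \<in> E \<and> prec (rev b) w v}"
definition FF where "FF b = (\<lambda>Q v. refine Q (Sv b v))"

lemma Sv_iff: "w \<in> Sv b v \<longleftrightarrow> (v,w) \<in> E \<and> prec b v w"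
  unfolding Sv_def prec_rev by simp

lemma key:
  assumes B: "is_bfs_order V T s b" and c: "c1 \<in> V" "c2 \<in> V" "c1 \<noteq> s" "c2 \<noteq> s" "par c1 = par c2" "lt c1 c2"
    and v2: "c2 \<in> Sv b v" and v1: "c1 \<notin> Sv b v"
  shows "\<exists>d. (c1 \<in> Sv b d) \<and> (c2 \<notin> Sv b d) \<and> prec b v d"
proof -
  note bb = bfs_basic[OF B]
  have db: "distinct b" using bb by blast
  have e2: "(v,c2) \<in> E" and p2: "prec b v c2" using v2 Sv_iff by auto
  have vV: "v \<in> V" using e2 EV by blast
  have "v \<noteq> c2" using e2 irr by blast
  then have "lt v c2 \<or> lt c2 v" using prec_total[of v \<sigma> c2] vV c setS by blast
  moreover have "\<not> lt c2 v"
  proof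
    assume "lt c2 v"
    then have "(v,c2) \<in> Rp\<^sup>+" using EA symE[OF e2] by blast
    then have "prec b c2 v" using bfs_anc[OF B] by blast
    then show False using p2 prec_asym[OF db] by blast
  qed
  ultimately have v2l: "lt v c2" by blast
  have "(c2, v) \<in> Rp\<^sup>+" using EA[OF e2 v2l] .
  then obtain z where z: "(c2, z) \<in> Rp" "(z, v) \<in> Rp\<^sup>*" using tranclD by metis
  have zx: "z = par c2" using z(1) Rp_V by blast
  have c1x: "(c1, par c1) \<in> Rp" using Rp_par[OF c(1) c(3)] .
  have "v \<noteq> par c1"
  proof
    assume vx: "v = par c1"
    have "(v, c1) \<in> E" using vx par_props[OF c(1) c(3)] by blast
    moreover have "prec b v c1" using vx bfs_par[OF B c(1) c(3)] by simp
    ultimately show False using v1 Sv_iff by blast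
  qed
  then have "(par c1, v) \<in> Rp\<^sup>+" using z zx c(5) by (metis rtrancl_eq_or_trancl)
  then have c1v: "(c1, v) \<in> Rp\<^sup>+" using c1x by (meson trancl_into_trancl2)
  then have pv1: "prec b v c1" using bfs_anc[OF B] by blast
  then have nv1: "(v,c1) \<notin> E" using v1 Sv_iff by blast
  have lv1: "lt v c1" using Rp_lt[OF c1v] .
  obtain d where d: "lt v d" "lt d c1" "(d,c1) \<in> E" "(d,c2) \<notin> E" using F1[OF lv1 c(6) e2 nv1] by blast
  have c1d: "(c1, d) \<in> Rp\<^sup>+" using EA[OF d(3) d(2)] .
  have "(d,v) \<in> Rp\<^sup>* \<or> (v,d) \<in> Rp\<^sup>*" using chain[of c1 d v] c1d c1v by (meson trancl_into_rtrancl)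
  moreover have "\<not> (v,d) \<in> Rp\<^sup>*"
  proof
    assume "(v,d) \<in> Rp\<^sup>*"
    then have "v = d \<or> lt d v" using rtrancl_lt by blast
    then show False using d(1) prec_irrefl[OF dist] prec_asym[OF dist] by blast
  qed
  ultimately have "(d,v) \<in> Rp\<^sup>*" by blast
  moreover have "d \<noteq> v" using d(1) prec_irrefl[OF dist] by blast
  ultimately have "(d,v) \<in> Rp\<^sup>+" by (metis rtrancl_eq_or_trancl)
  then have pvd: "prec b v d" using bfs_anc[OF B] by blast
  have "prec b d c1" using bfs_anc[OF B c1d] .
  then have "c1 \<in> Sv b d" using d(3) Sv_iff by blast
  moreover have "c2 \<notin> Sv b d" using d(4) Sv_iff by blast
  ultimately show ?thesis using pvd by blast
qed

lemma sib:
  assumes B: "is_bfs_order V T s b" and c: "c1 \<in> V" "c2 \<in> V" "c1 \<noteq> s" "c2 \<noteq> s" "par c1 = par c2" "lt c1 c2"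
  shows "same (foldl (FF b) [V] (rev b)) c1 c2 \<or> bef (foldl (FF b) [V] (rev b)) c1 c2"
proof -
  note bb = bfs_basic[OF B]
  define \<beta> where "\<beta> = rev b"
  have d\<beta>: "distinct \<beta>" using bb \<beta>_def by simp
  define sep where "sep v \<longleftrightarrow> (c1 \<in> Sv b v) \<noteq> (c2 \<in> Sv b v)" for v
  have inv: "((\<forall>v\<in>set (take k \<beta>). \<not> sep v) \<longrightarrow> same (foldl (FF b) [V] (take k \<beta>)) c1 c2) \<and>
             ((\<exists>v\<in>set (take k \<beta>). sep v) \<longrightarrow> bef (foldl (FF b) [V] (take k \<beta>)) c1 c2)"
    if "k \<le> length \<beta>" for k
    using that
  proof (induction k)
    case 0 then show ?case using c unfolding same_def by simp
  next
    case (Suc k)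
    have k: "k < length \<beta>" using Suc.prems by simp
    define v where "v = \<beta>!k"
    define Q where "Q = foldl (FF b) [V] (take k \<beta>)"
    have tk: "take (Suc k) \<beta> = take k \<beta> @ [v]" using k v_def by (simp add: take_Suc_conv_app_nth)
    have fq: "foldl (FF b) [V] (take (Suc k) \<beta>) = refine Q (Sv b v)" unfolding tk Q_def FF_def by simp
    have IH: "(\<forall>v\<in>set (take k \<beta>). \<not> sep v) \<longrightarrow> same Q c1 c2" "(\<exists>v\<in>set (take k \<beta>). sep v) \<longrightarrow> bef Q c1 c2"
      using Suc.IH k Q_def by auto
    have setk: "set (take (Suc k) \<beta>) = set (take k \<beta>) \<union> {v}" using tk by simp
    show ?case
    proof (cases "\<exists>u\<in>set (take k \<beta>). sep u")
      case True
      then have "bef Q c1 c2" using IH(2) by blast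
      then have bq: "bef (refine Q (Sv b v)) c1 c2" by (rule R1)
      have ex: "\<exists>u\<in>set (take (Suc k) \<beta>). sep u" using True setk by blast
      show ?thesis unfolding fq using ex bq by blast
    next
      case False
      then have sq: "same Q c1 c2" using IH by blast
      show ?thesis
      proof (cases "sep v")
        case False
        then have "same (refine Q (Sv b v)) c1 c2" using R3[OF sq] unfolding sep_def by blast
        moreover have "\<not> (\<exists>u\<in>set (take (Suc k) \<beta>). sep u)" using False \<open>\<not> (\<exists>u\<in>set (take k \<beta>). sep u)\<close> setk by blast
        ultimately show ?thesis unfolding fq by blast
      next
        case True
        have c1v: "c1 \<in> Sv b v"
        proof (rule ccontr)
          assume n1: "c1 \<notin> Sv b v"
          then have "c2 \<in> Sv b v" using True sep_def by blast
          then obtain d where d: "c1 \<in> Sv b d" "c2 \<notin> Sv b d" "prec b v d" using key[OF B c _ n1] by blast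
          have "prec \<beta> d (\<beta>!k)" using d(3) v_def \<beta>_def prec_rev by metis
          then have "d \<in> set (take k \<beta>)" using prec_nth_take[OF d\<beta> k] by blast
          moreover have "sep d" using d sep_def by blast
          ultimately show False using \<open>\<not> (\<exists>u\<in>set (take k \<beta>). sep u)\<close> by blast
        qed
        moreover have "c2 \<notin> Sv b v" using True c1v sep_def by blast
        ultimately have bq: "bef (refine Q (Sv b v)) c1 c2" using R2[OF sq] by blast
        have ex: "\<exists>u\<in>set (take (Suc k) \<beta>). sep u" using True setk by blast
        show ?thesis unfolding fq using ex bq by blast
      qed
    qed
  qed
  have "take (length \<beta>) \<beta> = \<beta>" by simp
  then have I2: "((\<forall>v\<in>set \<beta>. \<not> sep v) \<longrightarrow> same (foldl (FF b) [V] \<beta>) c1 c2) \<and>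
             ((\<exists>v\<in>set \<beta>. sep v) \<longrightarrow> bef (foldl (FF b) [V] \<beta>) c1 c2)" using inv[of "length \<beta>"] by simp
  then have "same (foldl (FF b) [V] \<beta>) c1 c2 \<or> bef (foldl (FF b) [V] \<beta>) c1 c2" by blast
  then show ?thesis using \<beta>_def by simp
qed

end

lemma last_unique: "distinct zs \<Longrightarrow> q \<in> set zs \<Longrightarrow> \<forall>y\<in>set zs. y \<noteq> q \<longrightarrow> prec zs y q \<Longrightarrow> last zs = q"
proof (rule ccontr)
  assume d: "distinct zs" and q: "q \<in> set zs" and h: "\<forall>y\<in>set zs. y \<noteq> q \<longrightarrow> prec zs y q" and ne: "last zs \<noteq> q"
  have "zs \<noteq> []" using q by auto
  then have "last zs \<in> set zs" by simp
  then have "prec zs (last zs) q" using h ne by blast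
  moreover have "prec zs q (last zs)" using last_prec[OF d q] ne by metis
  ultimately show False using prec_asym[OF d] by blast
qed

lemma prec_take2: "distinct xs \<Longrightarrow> prec xs u v \<Longrightarrow> u \<in> set (take i xs) \<Longrightarrow> v \<in> set (take i xs) \<Longrightarrow> prec (take i xs) u v"
proof -
  assume d: "distinct xs" and p: "prec xs u v" and u: "u \<in> set (take i xs)" and v: "v \<in> set (take i xs)"
  have "prec (take i xs @ drop i xs) u v" using p by simp
  then have "prec (take i xs) u v \<or> v \<in> set (drop i xs) \<or> prec (drop i xs) u v"
    unfolding prec_append by blast
  moreover have "set (take i xs) \<inter> set (drop i xs) = {}"
    using d by (metis append_take_drop_id distinct_append)
  ultimately show ?thesis using u v by (auto dest: prec_mem)
qed

context L begin

lemma dfs_main: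
  assumes dt: "distinct \<tau>" and st: "set \<tau> = V" and lt\<tau>: "last \<tau> = s"
    and sibp: "\<And>c1 c2. c1 \<in> V \<Longrightarrow> c2 \<in> V \<Longrightarrow> c1 \<noteq> s \<Longrightarrow> c2 \<noteq> s \<Longrightarrow> par c1 = par c2 \<Longrightarrow> lt c1 c2 \<Longrightarrow> prec \<tau> c2 c1"
  shows "dfs_plus T \<tau> = \<sigma>"
proof -
  have step: "k < n \<Longrightarrow> dfs_plus_aux T \<tau> k = take (Suc k) \<sigma>" for k
  proof (induction k)
    case 0 then show ?case using lt\<tau> s0 n_pos by (cases \<sigma>) auto
  next
    case (Suc k)
    define i where "i = Suc k"
    define p where "p = take i \<sigma>"
    have i: "1 \<le> i" "i < n" using Suc.prems i_def by auto
    have IH: "dfs_plus_aux T \<tau> k = p" using Suc i_def p_def by simp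
    define U where "U = filter (\<lambda>v. v \<notin> set p) \<tau>"
    define L1 where "L1 = filter (\<lambda>x. \<exists>w\<in>set U. (x,w) \<in> T) p"
    define v where "v = \<sigma>!i"
    have vV: "v \<in> V" using i v_def by simp
    have vs: "v \<noteq> s" using i idx_nth[OF i(2)] v_def idx_s by (metis not_one_le_zero)
    note P = par_props[OF vV vs]
    define q where "q = par v"
    have qp: "q \<in> set p" using in_take P(2,4) lt_idx v_def i p_def q_def by simp
    have vp: "v \<notin> set p" using in_take vV v_def i p_def by simp
    have vU: "v \<in> set U" using vV vp st U_def by simp
    have qvT: "(q, v) \<in> T" using Tchar vV vs q_def by blast
    have dp: "distinct p" using dist p_def by simp
    have x: "last L1 = q"
    proof (rule last_unique)
      show "distinct L1" using dp L1_def by simp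
      show "q \<in> set L1" using qp vU qvT L1_def by auto
      show "\<forall>y\<in>set L1. y \<noteq> q \<longrightarrow> prec L1 y q"
      proof (intro ballI impI)
        fix y assume y: "y \<in> set L1" "y \<noteq> q"
        then have yp: "y \<in> set p" and "\<exists>w\<in>set U. (y,w) \<in> T" using L1_def by auto
        then obtain w where w: "w \<in> set U" "(y,w) \<in> T" by blast
        have wV: "w \<in> V" "w \<notin> set p" using w st U_def by auto
        have yV: "y \<in> V" using yp p_def setS by (meson in_set_takeD)
        have "\<not> lt q y" using noesc[OF i _ _ wV[unfolded p_def] w(2)] yp p_def q_def v_def by blast
        then have "lt y q" using prec_total[of y \<sigma> q] y(2) yV P(4) q_def setS by blast
        then have "prec p y q" using prec_take2[OF dist] yp qp p_def by blast
        then show "prec L1 y q" unfolding L1_def prec_filter using w vU qvT by blast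
      qed
    qed
    define L2 where "L2 = filter (\<lambda>w. (q,w) \<in> T) U"
    have y: "last L2 = v"
    proof (rule last_unique)
      show "distinct L2" using dt L2_def U_def by simp
      show "v \<in> set L2" using vU qvT L2_def by simp
      show "\<forall>c\<in>set L2. c \<noteq> v \<longrightarrow> prec L2 c v"
      proof (intro ballI impI)
        fix c assume c: "c \<in> set L2" "c \<noteq> v"
        then have cU: "c \<in> set U" and qc: "(q,c) \<in> T" using L2_def by auto
        then have cV: "c \<in> V" "c \<notin> set p" using st U_def by auto
        from qc[unfolded Tchar] have pc: "c \<noteq> s \<and> par c = par v"
        proof
          assume h: "q \<in> V \<and> q \<noteq> s \<and> c = par q"
          then have "lt c q" using par_props by blast
          then have "c \<in> set p" using prec_take[OF dist] qp p_def by blast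
          then show ?thesis using cV by blast
        next
          assume "c \<in> V \<and> c \<noteq> s \<and> q = par c" then show ?thesis using q_def by simp
        qed
        have "idx c \<noteq> i" using c(2) v_def idx[OF cV(1)] by metis
        then have "i < idx c" using cV in_take p_def by simp
        then have "lt v c" using lt_idx vV cV v_def i by simp
        then have "prec \<tau> c v" using sibp[OF vV cV(1) vs] pc by simp
        then show "prec L2 c v" unfolding L2_def U_def prec_filter using cV vp qc qvT by blast
      qed
    qed
    have "dfs_plus_aux T \<tau> (Suc k) = p @ [v]"
      using IH x y unfolding L1_def L2_def U_def q_def by (simp add: Let_def)
    also have "\<dots> = take (Suc i) \<sigma>" using i v_def p_def by (simp add: take_Suc_conv_app_nth)
    finally show ?case using i_def by simp
  qed
  have "length \<tau> = n" using distinct_card[OF dt] st cardV' by simp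
  then show ?thesis unfolding dfs_plus_def using step[of "n - 1"] n_pos by simp
qed


lemma foldl_inv: "pdisj Q0 \<Longrightarrow> \<Union>(set Q0) = V \<Longrightarrow> pdisj (foldl (FF b) Q0 xs) \<and> \<Union>(set (foldl (FF b) Q0 xs)) = V"
proof (induction xs arbitrary: Q0)
  case Nil then show ?case by simp
next
  case (Cons x xs)
  have "pdisj (FF b Q0 x)" unfolding FF_def by (rule refine_pdisj[OF Cons.prems(1)])
  moreover have "\<Union>(set (FF b Q0 x)) = V" unfolding FF_def refine_Un using Cons.prems(2) .
  ultimately have "pdisj (FF b Q0 x)" "\<Union>(set (FF b Q0 x)) = V" by auto
  then show ?case using Cons.IH by simp
qed

lemma ordering_eq: assumes B: "is_bfs_order V T s b" shows "ordering V E T s (rev \<sigma>) (rev b) = \<sigma>"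
proof -
  define Q where "Q = foldl (FF b) [V] (rev b)"
  have FQ: "foldl (\<lambda>Q v. refine Q {w. (v, w) \<in> E \<and> prec (rev b) w v}) [V] (rev b) = Q"
    unfolding Q_def FF_def Sv_def ..
  have pd: "pdisj Q" "\<Union>(set Q) = V" using foldl_inv[of "[V]" b "rev b"] Q_def by auto
  define ord where "ord = s # filter (\<lambda>v. v \<noteq> s) (flat \<sigma> Q)"
  have oe: "ordering V E T s (rev \<sigma>) (rev b) = dfs_plus T (rev ord)"
    unfolding ordering_def Let_def FQ ord_def flat_def by simp
  have d: "distinct ord" using flat_dist[OF dist pd(1)] ord_def by simp
  have st: "set ord = V" using flat_set[of \<sigma> Q] pd setS sV ord_def by auto
  have sib': "prec (rev ord) c2 c1" if c: "c1 \<in> V" "c2 \<in> V" "c1 \<noteq> s" "c2 \<noteq> s" "par c1 = par c2" "lt c1 c2" for c1 c2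
  proof -
    have "same Q c1 c2 \<or> bef Q c1 c2" using sib[OF B c] Q_def by simp
    then have "prec (flat \<sigma> Q) c1 c2"
    proof
      assume sq: "same Q c1 c2" show ?thesis using flat_same[OF sq c(6)] .
    next
      assume bq: "bef Q c1 c2" show ?thesis using flat_bef[OF bq] c setS by blast
    qed
    then have "prec ord c1 c2" unfolding ord_def prec_Cons prec_filter using c by blast
    then show ?thesis unfolding prec_rev .
  qed
  have "dfs_plus T (rev ord) = \<sigma>"
    by (rule dfs_main) (use d st sib' ord_def in auto)
  then show ?thesis using oe by simp
qed

lemma bfs_exists: "\<exists>b. is_bfs_order V T s b"
proof -
  define P where "P p i = (\<lambda>x. \<exists>w\<in>V - set (take i p). (x,w) \<in> T)" for p :: "'a list" and i
  have gen: "\<exists>p. length p = k \<and> distinct p \<and> set p \<subseteq> V \<and> p!0 = s \<and>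
      (\<forall>i. 0 < i \<and> i < k \<longrightarrow> (hd (filter (P p i) (take i p)), p!i) \<in> T)" if "1 \<le> k" "k \<le> n" for k
    using that
  proof (induction k rule: nat_induct_at_least)
    case base then show ?case using sV by (intro exI[of _ "[s]"]) auto
  next
    case (Suc k)
    then obtain p where p: "length p = k" "distinct p" "set p \<subseteq> V" "p!0 = s"
      "\<forall>i. 0 < i \<and> i < k \<longrightarrow> (hd (filter (P p i) (take i p)), p!i) \<in> T" by auto
    have sp: "s \<in> set p" using p Suc.hyps by (metis gr0I nth_mem not_one_le_zero)
    have cp: "card (set p) = k" using distinct_card[OF p(2)] p(1) by simp
    have "V - set p \<noteq> {}"
    proof
      assume "V - set p = {}"
      then have "V \<subseteq> set p" by blast
      then have "card V \<le> card (set p)" by (intro card_mono) auto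
      then show False using cp cardV' Suc.prems by simp
    qed
    then obtain w0 where w0: "w0 \<in> V" "w0 \<notin> set p" by blast
    obtain y where y: "y \<in> V" "y \<notin> set p" "y \<noteq> s" "par y \<in> set p" using Tcross[OF p(3) sp w0] by blast
    have tk: "take k p = p" using p(1) by simp
    have "P p k (par y)" unfolding P_def tk using y Tchar by blast
    then have "filter (P p k) p \<noteq> []" using y(4) by (metis filter_empty_conv)
    then have "hd (filter (P p k) p) \<in> set (filter (P p k) p)" by (rule hd_in_set)
    then have "P p k (hd (filter (P p k) p))" by simp
    then obtain w where w: "w \<in> V" "w \<notin> set p" "(hd (filter (P p k) p), w) \<in> T" unfolding P_def tk by blast
    define p' where "p' = p @ [w]"
    have "\<forall>i. 0 < i \<and> i < Suc k \<longrightarrow> (hd (filter (P p' i) (take i p')), p'!i) \<in> T"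
    proof (intro allI impI)
      fix i assume i: "0 < i \<and> i < Suc k"
      show "(hd (filter (P p' i) (take i p')), p'!i) \<in> T"
      proof (cases "i = k")
        case True
        have "take i p' = p" using True p(1) p'_def by simp
        moreover have "p'!i = w" using True p(1) p'_def by (simp add: nth_append)
        moreover have "P p' i = P p k" using True \<open>take i p' = p\<close> tk unfolding P_def by simp
        ultimately show ?thesis using w by simp
      next
        case False
        then have ik: "i < k" using i by simp
        have "take i p' = take i p" using ik p(1) p'_def by simp
        moreover have "p'!i = p!i" using ik p(1) p'_def by (simp add: nth_append)
        moreover have "P p' i = P p i" using \<open>take i p' = take i p\<close> unfolding P_def by simp
        ultimately show ?thesis using p(5) ik i by simp
      qed
    qed
    moreover have "length p' = Suc k" "distinct p'" "set p' \<subseteq> V" "p'!0 = s"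
      using p w Suc.hyps p'_def by (auto simp: nth_append)
    ultimately show ?case by blast
  qed
  obtain p where p: "length p = n" "distinct p" "set p \<subseteq> V" "p!0 = s"
      "\<forall>i. 0 < i \<and> i < n \<longrightarrow> (hd (filter (P p i) (take i p)), p!i) \<in> T"
    using gen[of n] n_pos by auto
  have "card (set p) = card V" using distinct_card[OF p(2)] p(1) cardV' by simp
  then have "set p = V" using p(3) finV by (simp add: card_subset_eq)
  then have "is_bfs_order V T s p" unfolding is_bfs_order_def vertex_order_def Let_def
    using p n_pos unfolding P_def by auto
  then show ?thesis by blast
qed

end

context LC begin

lemma main: "lexdfs_plus_chordal_outputs V E s (rev \<sigma>) = {\<sigma>}"
proof -
  have "lexdfs_plus_chordal_outputs V E s (rev \<sigma>) = {ordering V E T s (rev \<sigma>) (rev b) | b. is_bfs_order V T s b}"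
    unfolding lexdfs_plus_chordal_outputs_def Let_def T_eq ..
  also have "\<dots> = {\<sigma>}"
  proof (rule set_eqI)
    fix x
    obtain b0 where b0: "is_bfs_order V T s b0" using bfs_exists by blast
    have "\<sigma> = ordering V E T s (rev \<sigma>) (rev b0)" using ordering_eq[OF b0] by simp
    then show "x \<in> {ordering V E T s (rev \<sigma>) (rev b) | b. is_bfs_order V T s b} \<longleftrightarrow> x \<in> {\<sigma>}"
      using ordering_eq b0 by blast
  qed
  finally show ?thesis .
qed

end

theorem corollary17:
  fixes V :: "'a set" and E :: "('a \<times> 'a) set" and s :: 'a and \<sigma> :: "'a list"
  assumes "graph V E" and "chordal V E" and "is_lexdfs_order V E s \<sigma>"
  shows "\<exists>\<rho>. \<rho> = rev \<sigma> \<and> vertex_order V \<rho> \<and> last \<rho> = s \<and>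
           lexdfs_plus_chordal_outputs V E s \<rho> = {\<sigma>}"
proof -
  interpret LC V E s \<sigma> using assms by (unfold_locales) auto
  have "vertex_order V (rev \<sigma>)" using dist setS unfolding vertex_order_def by simp
  then show ?thesis using last_rho main by blast
qed

end
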